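(* Let $X_1,\dots,X_n$ be i.i.d. $\mathsf{GOE}(d)$ and suppose $n\ge C_3dr^2$ for a sufficiently large constant $C_3$. Then with probability at least $1-2\exp(-C_1dr)-2\exp(-C_2n)$ (for positive constants $C_1,C_2$), \[ \sup_{V\in\mathbb{R}^{d\times r}:\ \|V\|\le 1}\big\|(\mathcal{X}^*\mathcal{X}-\mathcal{I})(VV^\top)\big\|\le C\,\frac{r\sqrt d}{\sqrt n}. \]
   Context: $\mathsf{GOE}(d)$ denotes the law of a symmetric $d\times d$ matrix whose diagonal entries are i.i.d. $N(0,1)$ and whose entries above the diagonal are i.i.d. $N(0,1/2)$, independent of the diagonal. $\mathcal{X}:\mathbb{R}^{d\times d}\to\mathbb{R}^n$ is $\mathcal{X}(A)_i=n^{-1/2}\langle X_i,A\rangle$ (Frobenius inner product), $\mathcal{X}^*$ its adjoint so that $\mathcal{X}^*\mathcal{X}(A)=\frac1n\sum_i\langle X_i,A\rangle X_i$, and $\mathcal{I}$ the identity operator. $\|\cdot\|$ denotes the spectral norm. *)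

theory Defs
  imports "HOL-Probability.Probability"
begin

text \<open>Matrices are represented as functions nat => nat => real; only the
entries with indices inside the stated dimensions are ever used.\<close>

definition spec_norm :: "nat \<Rightarrow> nat \<Rightarrow> (nat \<Rightarrow> nat \<Rightarrow> real) \<Rightarrow> real" where
  "spec_norm m k A = Sup {sqrt (\<Sum>i<m. (\<Sum>j<k. A i j * x j)\<^sup>2) | x.
                          (\<Sum>j<k. (x j)\<^sup>2) \<le> 1}"

definition frob :: "nat \<Rightarrow> (nat \<Rightarrow> nat \<Rightarrow> real) \<Rightarrow> (nat \<Rightarrow> nat \<Rightarrow> real) \<Rightarrow> real" where
  "frob d A B = (\<Sum>i<d. \<Sum>j<d. A i j * B i j)"

definition outer_VVt :: "nat \<Rightarrow> (nat \<Rightarrow> nat \<Rightarrow> real) \<Rightarrow> (nat \<Rightarrow> nat \<Rightarrow> real)" where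
  "outer_VVt r V = (\<lambda>i j. \<Sum>l<r. V i l * V j l)"

text \<open>Law of the independent free entries of n i.i.d. GOE(d) matrices:
index (k,i,j) with k < n and i \<le> j < d; diagonal entries N(0,1),
off-diagonal entries N(0,1/2) (standard deviation sqrt(1/2)).\<close>
definition goe_index :: "nat \<Rightarrow> nat \<Rightarrow> (nat \<times> nat \<times> nat) set" where
  "goe_index n d = {(k,i,j). k < n \<and> i \<le> j \<and> j < d}"

definition goe_sample_space :: "nat \<Rightarrow> nat \<Rightarrow> (nat \<times> nat \<times> nat \<Rightarrow> real) measure" where
  "goe_sample_space n d = (\<Pi>\<^sub>M (k,i,j)\<in>goe_index n d.
      density lborel (normal_density 0 (if i = j then 1 else sqrt (1/2))))"

definition goe_mat :: "(nat \<times> nat \<times> nat \<Rightarrow> real) \<Rightarrow> nat \<Rightarrow> (nat \<Rightarrow> nat \<Rightarrow> real)" where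
  "goe_mat \<omega> k = (\<lambda>i j. \<omega> (k, min i j, max i j))"

definition XsX_minus_I :: "nat \<Rightarrow> nat \<Rightarrow> (nat \<Rightarrow> nat \<Rightarrow> nat \<Rightarrow> real)
      \<Rightarrow> (nat \<Rightarrow> nat \<Rightarrow> real) \<Rightarrow> (nat \<Rightarrow> nat \<Rightarrow> real)" where
  "XsX_minus_I n d X A = (\<lambda>i j. (1 / real n) * (\<Sum>k<n. frob d (X k) A * X k i j) - A i j)"

end

theory Submission
  imports Defs
begin


lemma L2_set_scale: "L2_set (\<lambda>i. c * f i) A = \<bar>c\<bar> * L2_set f A"
  unfolding L2_set_def
  by (simp add: power_mult_distrib real_sqrt_mult sum_distrib_left[symmetric])

lemma abs_le_L2_set: "finite A \<Longrightarrow> i \<in> A \<Longrightarrow> \<bar>f i\<bar> \<le> L2_set f A"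
  unfolding L2_set_def
  by (metis member_le_sum real_sqrt_abs real_sqrt_le_mono zero_le_power2)

lemma L2_set_div: "L2_set (\<lambda>i. f i / c) A = L2_set f A / \<bar>c\<bar>"
  using L2_set_scale[of "1/c" f A] by (simp add: field_simps)

lemma spec_set_eq:
  "{sqrt (\<Sum>i<m. (\<Sum>j<k. A i j * x j)\<^sup>2) | x. (\<Sum>j<k. (x j)\<^sup>2) \<le> 1}
   = {L2_set (\<lambda>i. \<Sum>j<k. A i j * x j) {..<m} | x. L2_set x {..<k} \<le> 1}"
  by (simp add: L2_set_def)

lemma spec_norm_L2: "spec_norm m k A = Sup {L2_set (\<lambda>i. \<Sum>j<k. A i j * x j) {..<m} | x. L2_set x {..<k} \<le> 1}"
  unfolding spec_norm_def spec_set_eq ..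

lemma mv_le_frob:
  "L2_set (\<lambda>i. \<Sum>j<k. A i j * x j) {..<m} \<le> sqrt (\<Sum>i<m. \<Sum>j<k. (A i j)\<^sup>2) * L2_set x {..<k}"
proof -
  have "(\<Sum>i<m. (\<Sum>j<k. A i j * x j)\<^sup>2) \<le> (\<Sum>i<m. (\<Sum>j<k. (A i j)\<^sup>2) * (\<Sum>j<k. (x j)\<^sup>2))"
  proof (intro sum_mono)
    fix i
    have "\<bar>\<Sum>j<k. A i j * x j\<bar> \<le> (\<Sum>j<k. \<bar>A i j\<bar> * \<bar>x j\<bar>)"
      by (rule order.trans[OF sum_abs]) (simp add: abs_mult)
    also have "\<dots> \<le> L2_set (A i) {..<k} * L2_set x {..<k}" by (rule L2_set_mult_ineq)
    finally have "\<bar>\<Sum>j<k. A i j * x j\<bar>\<^sup>2 \<le> (L2_set (A i) {..<k} * L2_set x {..<k})\<^sup>2"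
      by (rule power_mono) simp
    also have "\<dots> = (\<Sum>j<k. (A i j)\<^sup>2) * (\<Sum>j<k. (x j)\<^sup>2)"
      by (simp add: L2_set_def power_mult_distrib sum_nonneg)
    finally show "(\<Sum>j<k. A i j * x j)\<^sup>2 \<le> (\<Sum>j<k. (A i j)\<^sup>2) * (\<Sum>j<k. (x j)\<^sup>2)" by simp
  qed
  also have "\<dots> = (\<Sum>i<m. \<Sum>j<k. (A i j)\<^sup>2) * (\<Sum>j<k. (x j)\<^sup>2)"
    by (simp add: sum_distrib_right)
  finally have "sqrt (\<Sum>i<m. (\<Sum>j<k. A i j * x j)\<^sup>2) \<le> sqrt ((\<Sum>i<m. \<Sum>j<k. (A i j)\<^sup>2) * (\<Sum>j<k. (x j)\<^sup>2))"
    by (rule real_sqrt_le_mono)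
  then show ?thesis by (simp add: L2_set_def real_sqrt_mult)
qed

lemma spec_bdd: "bdd_above {L2_set (\<lambda>i. \<Sum>j<k. (A::nat\<Rightarrow>nat\<Rightarrow>real) i j * x j) {..<m} | x. L2_set x {..<k} \<le> 1}"
proof (rule bdd_aboveI[where M="sqrt (\<Sum>i<m. \<Sum>j<k. (A i j)\<^sup>2)"], clarify)
  fix x :: "nat \<Rightarrow> real" assume x: "L2_set x {..<k} \<le> 1"
  have "L2_set (\<lambda>i. \<Sum>j<k. A i j * x j) {..<m} \<le> sqrt (\<Sum>i<m. \<Sum>j<k. (A i j)\<^sup>2) * L2_set x {..<k}"
    by (rule mv_le_frob)
  also have "\<dots> \<le> sqrt (\<Sum>i<m. \<Sum>j<k. (A i j)\<^sup>2)"
    using x by (intro mult_left_le) (auto intro!: sum_nonneg)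
  finally show "L2_set (\<lambda>i. \<Sum>j<k. A i j * x j) {..<m} \<le> sqrt (\<Sum>i<m. \<Sum>j<k. (A i j)\<^sup>2)" .
qed

lemma spec_upper:
  assumes "L2_set x {..<k} \<le> 1"
  shows "L2_set (\<lambda>i. \<Sum>j<k. A i j * x j) {..<m} \<le> spec_norm m k A"
  unfolding spec_norm_L2
  by (rule cSup_upper[OF _ spec_bdd]) (use assms in blast)

lemma spec_least:
  assumes "\<And>x. L2_set x {..<k} \<le> 1 \<Longrightarrow> L2_set (\<lambda>i. \<Sum>j<k. A i j * x j) {..<m} \<le> b"
  shows "spec_norm m k A \<le> b"
  unfolding spec_norm_L2
proof (rule cSup_least)
  have "L2_set (\<lambda>i. \<Sum>j<k. A i j * 0) {..<m} \<in> {L2_set (\<lambda>i. \<Sum>j<k. A i j * x j) {..<m} |x. L2_set x {..<k} \<le> 1}"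
    by (rule CollectI, rule exI[of _ "\<lambda>_. 0"]) (simp add: L2_set_0')
  then show "{L2_set (\<lambda>i. \<Sum>j<k. A i j * x j) {..<m} |x. L2_set x {..<k} \<le> 1} \<noteq> {}"
    by blast
qed (use assms in blast)

lemma spec_nonneg: "0 \<le> spec_norm m k A"
  using spec_upper[of "\<lambda>_. 0" k A m] by (simp add: L2_set_0')

lemma spec_frob: "spec_norm m k A \<le> sqrt (\<Sum>i<m. \<Sum>j<k. (A i j)\<^sup>2)"
  by (rule spec_least, rule order.trans[OF mv_le_frob], rule mult_left_le) (auto intro!: sum_nonneg)

lemma spec_mv:
  "L2_set (\<lambda>i. \<Sum>j<k. A i j * x j) {..<m} \<le> spec_norm m k A * L2_set x {..<k}"
proof (cases "L2_set x {..<k} = 0")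
  case True
  then have "\<forall>j\<in>{..<k}. x j = 0" by (simp add: L2_set_eq_0_iff)
  then show ?thesis using spec_nonneg[of m k A] by (simp add: L2_set_0')
next
  case False
  define c where "c = L2_set x {..<k}"
  have c: "c > 0" using False L2_set_nonneg[of x "{..<k}"] unfolding c_def by linarith
  have "L2_set (\<lambda>j. x j / c) {..<k} = 1"
    using c by (simp add: L2_set_div c_def)
  then have "L2_set (\<lambda>i. \<Sum>j<k. A i j * (x j / c)) {..<m} \<le> spec_norm m k A"
    by (intro spec_upper) simp
  moreover have "(\<lambda>i. \<Sum>j<k. A i j * (x j / c)) = (\<lambda>i. (\<Sum>j<k. A i j * x j) / c)"
    by (simp add: sum_divide_distrib)
  ultimately have "L2_set (\<lambda>i. \<Sum>j<k. A i j * x j) {..<m} / c \<le> spec_norm m k A"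
    using c by (simp add: L2_set_div)
  then show ?thesis using c by (simp add: c_def[symmetric] field_simps)
qed

lemma spec_add: "spec_norm m k (\<lambda>i j. A i j + B i j) \<le> spec_norm m k A + spec_norm m k B"
proof (rule spec_least)
  fix x :: "nat \<Rightarrow> real" assume x: "L2_set x {..<k} \<le> 1"
  have "L2_set (\<lambda>i. \<Sum>j<k. (A i j + B i j) * x j) {..<m}
      = L2_set (\<lambda>i. (\<Sum>j<k. A i j * x j) + (\<Sum>j<k. B i j * x j)) {..<m}"
    by (simp add: distrib_right sum.distrib)
  also have "\<dots> \<le> L2_set (\<lambda>i. \<Sum>j<k. A i j * x j) {..<m} + L2_set (\<lambda>i. \<Sum>j<k. B i j * x j) {..<m}"
    by (rule L2_set_triangle_ineq)
  also have "\<dots> \<le> spec_norm m k A + spec_norm m k B"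
    by (intro add_mono spec_upper x)
  finally show "L2_set (\<lambda>i. \<Sum>j<k. (A i j + B i j) * x j) {..<m} \<le> spec_norm m k A + spec_norm m k B" .
qed

lemma spec_scale_le: "spec_norm m k (\<lambda>i j. c * A i j) \<le> \<bar>c\<bar> * spec_norm m k A"
proof (rule spec_least)
  fix x :: "nat \<Rightarrow> real" assume x: "L2_set x {..<k} \<le> 1"
  have "(\<lambda>i. \<Sum>j<k. c * A i j * x j) = (\<lambda>i. c * (\<Sum>j<k. A i j * x j))"
    by (simp add: sum_distrib_left algebra_simps)
  then have "L2_set (\<lambda>i. \<Sum>j<k. c * A i j * x j) {..<m} = \<bar>c\<bar> * L2_set (\<lambda>i. \<Sum>j<k. A i j * x j) {..<m}"
    by (simp add: L2_set_scale)
  also have "\<dots> \<le> \<bar>c\<bar> * spec_norm m k A"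
    by (intro mult_left_mono spec_upper x) simp
  finally show "L2_set (\<lambda>i. \<Sum>j<k. c * A i j * x j) {..<m} \<le> \<bar>c\<bar> * spec_norm m k A" .
qed

lemma spec_scale: "spec_norm m k (\<lambda>i j. c * A i j) = \<bar>c\<bar> * spec_norm m k A"
proof (cases "c = 0")
  case True then show ?thesis using spec_scale_le[of m k 0 A] spec_nonneg[of m k "\<lambda>i j. 0 * A i j"] by simp
next
  case False
  have "spec_norm m k A = spec_norm m k (\<lambda>i j. (1/c) * (c * A i j))" using False by simp
  also have "\<dots> \<le> \<bar>1/c\<bar> * spec_norm m k (\<lambda>i j. c * A i j)" by (rule spec_scale_le)
  finally have "\<bar>c\<bar> * spec_norm m k A \<le> spec_norm m k (\<lambda>i j. c * A i j)"
    using False by (simp add: field_simps)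
  with spec_scale_le[of m k c A] show ?thesis by simp
qed

lemma spec_entry:
  assumes "i < m" "j < k"
  shows "\<bar>A i j\<bar> \<le> spec_norm m k A"
proof -
  let ?x = "\<lambda>l. if l = j then 1 else 0 :: real"
  have x: "L2_set ?x {..<k} = 1"
  proof -
    have "(\<Sum>l<k. (?x l)\<^sup>2) = (\<Sum>l<k. ?x l)" by (rule sum.cong) auto
    also have "\<dots> = 1" using assms by simp
    finally have "(\<Sum>l<k. (?x l)\<^sup>2) = 1" .
    then show ?thesis by (simp add: L2_set_def)
  qed
  have "(\<Sum>l<k. A i l * ?x l) = (\<Sum>l<k. if l = j then A i l else 0)" by (rule sum.cong) auto
  then have "\<bar>A i j\<bar> = \<bar>\<Sum>l<k. A i l * ?x l\<bar>" using assms by simp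
  also have "\<dots> \<le> L2_set (\<lambda>i. \<Sum>l<k. A i l * ?x l) {..<m}"
    using assms by (intro abs_le_L2_set) auto
  also have "\<dots> \<le> spec_norm m k A" by (rule spec_upper) (simp add: x)
  finally show ?thesis .
qed

lemma spec_cong:
  assumes "\<And>i j. i < m \<Longrightarrow> j < k \<Longrightarrow> A i j = B i j"
  shows "spec_norm m k A = spec_norm m k B"
proof -
  have "L2_set (\<lambda>i. \<Sum>j<k. A i j * x j) {..<m} = L2_set (\<lambda>i. \<Sum>j<k. B i j * x j) {..<m}" for x
    using assms by (intro L2_set_cong refl sum.cong) auto
  then show ?thesis unfolding spec_norm_L2 by simp
qed


lemma lborel_affine_preimage:
  assumes r: "r > 0" and B: "B \<in> sets borel"
  shows "emeasure lborel {t::real. (t - a) / r \<in> B} = ennreal r * emeasure lborel B"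
proof -
  have m: "{t::real. (t - a) / r \<in> B} \<in> sets borel"
  proof -
    have "(\<lambda>t::real. (t - a) / r) \<in> borel_measurable borel" by simp
    from measurable_sets[OF this B] have "(\<lambda>t::real. (t - a) / r) -` B \<inter> space borel \<in> sets borel" .
    then show ?thesis by (simp add: vimage_def)
  qed
  have "emeasure lborel {t::real. (t - a) / r \<in> B} = (\<integral>\<^sup>+x. indicator {t::real. (t - a) / r \<in> B} x \<partial>lborel)"
    using m by simp
  also have "\<dots> = ennreal \<bar>r\<bar> * (\<integral>\<^sup>+x. indicator {t::real. (t - a) / r \<in> B} (a + r * x) \<partial>lborel)"
    using m r by (intro nn_integral_real_affine) auto
  also have "(\<lambda>x. indicator {t::real. (t - a) / r \<in> B} (a + r * x) :: ennreal) = indicator B"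
    using r by (auto simp: indicator_def fun_eq_iff)
  also have "(\<integral>\<^sup>+x. indicator B x \<partial>lborel) = emeasure lborel B"
    using B by simp
  finally show ?thesis using r by simp
qed

locale packing =
  fixes A :: "'a set" and p :: "('a \<Rightarrow> real) \<Rightarrow> real" and \<delta> :: real
  assumes finA: "finite A"
  and p_cong: "\<And>f g. (\<And>i. i \<in> A \<Longrightarrow> f i = g i) \<Longrightarrow> p f = p g"
  and p_scale: "\<And>c f. p (\<lambda>i. c * f i) = \<bar>c\<bar> * p f"
  and p_add: "\<And>f g. p (\<lambda>i. f i + g i) \<le> p f + p g"
  and p_bound: "\<And>f i. p f \<le> 1 \<Longrightarrow> i \<in> A \<Longrightarrow> \<bar>f i\<bar> \<le> 1"
  and \<delta>pos: "\<delta> > 0"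
  and p_small: "\<And>f. (\<And>i. i \<in> A \<Longrightarrow> \<bar>f i\<bar> \<le> \<delta>) \<Longrightarrow> p f \<le> 1"
  and p_meas: "{f \<in> space (PiM A (\<lambda>_. lborel)). p f \<le> 1} \<in> sets (PiM A (\<lambda>_. lborel :: real measure))"
begin

abbreviation L where "L \<equiv> PiM A (\<lambda>_. lborel :: real measure)"
definition K where "K = {f \<in> space L. p f \<le> 1}"
definition T where "T y r = (\<lambda>f. \<lambda>i\<in>A. (f i - y i) / r)"
definition ball where "ball y r = {f \<in> space L. p (\<lambda>i. f i - y i) \<le> r}"

lemma p_zero: "p (\<lambda>_. 0) = 0"
  using p_scale[of 0 "\<lambda>_. 0"] by simp

lemma p_nonneg: "0 \<le> p f"
proof -
  have "p (\<lambda>i. f i + (-1) * f i) \<le> p f + p (\<lambda>i. (-1) * f i)" by (rule p_add)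
  then show ?thesis using p_zero p_scale[of "-1" f] by simp
qed

lemma p_sub_sym: "p (\<lambda>i. f i - g i) = p (\<lambda>i. g i - f i)"
  using p_scale[of "-1" "\<lambda>i. f i - g i"] by simp

lemma p_tri: "p (\<lambda>i. f i - h i) \<le> p (\<lambda>i. f i - g i) + p (\<lambda>i. g i - h i)"
  using p_add[of "\<lambda>i. f i - g i" "\<lambda>i. g i - h i"] by simp

lemma sets_L: "sets L = sets (PiM A (\<lambda>_. borel :: real measure))"
  by (intro sets_PiM_cong) auto

lemma T_meas: "T y r \<in> measurable L L"
  unfolding T_def by (intro measurable_restrict) simp

lemma K_sets: "K \<in> sets L" using p_meas by (simp add: K_def)

lemma ball_eq:
  assumes r: "r > 0"
  shows "ball y r = T y r -` K \<inter> space L"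
proof -
  have "p (T y r f) \<le> 1 \<longleftrightarrow> p (\<lambda>i. f i - y i) \<le> r" for f
  proof -
    have "p (T y r f) = p (\<lambda>i. (1/r) * (f i - y i))"
      by (rule p_cong) (simp add: T_def)
    also have "\<dots> = p (\<lambda>i. f i - y i) / r" using r p_scale[of "1/r" "\<lambda>i. f i - y i"] by simp
    finally show ?thesis using r by (simp add: divide_le_eq)
  qed
  moreover have "T y r f \<in> space L" for f
    using measurable_space[OF T_meas] by (auto simp: T_def space_PiM)
  ultimately show ?thesis using r by (auto simp: ball_def K_def)
qed

lemma ball_sets: "r > 0 \<Longrightarrow> ball y r \<in> sets L"
  using ball_eq measurable_sets[OF T_meas K_sets] by simp

lemma distr_T:
  assumes r: "r > 0"
  shows "distr L L (T y r) = density L (\<lambda>_. ennreal (r ^ card A))"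
proof (rule measure_eqI_PiM_finite[where I=A and M="\<lambda>_. lborel"])
  show "finite A" by (rule finA)
  show "sets (distr L L (T y r)) = sets L" by simp
  show "sets (density L (\<lambda>_. ennreal (r ^ card A))) = sets L" by simp
next
  interpret product_sigma_finite "\<lambda>_. lborel :: real measure" ..
  have box: "emeasure (distr L L (T y r)) (Pi\<^sub>E A B) = (\<Prod>i\<in>A. ennreal r * emeasure lborel (B i))"
    if B: "\<And>i. i \<in> A \<Longrightarrow> B i \<in> sets lborel" for B
  proof -
    have PB: "Pi\<^sub>E A B \<in> sets L" using B finA by (intro sets_PiM_I_finite) auto
    have "emeasure (distr L L (T y r)) (Pi\<^sub>E A B) = emeasure L (T y r -` Pi\<^sub>E A B \<inter> space L)"
      using PB by (intro emeasure_distr T_meas)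
    also have "T y r -` Pi\<^sub>E A B \<inter> space L = Pi\<^sub>E A (\<lambda>i. {t. (t - y i) / r \<in> B i})"
      by (auto simp: T_def space_PiM PiE_def Pi_def extensional_def)
    also have "emeasure L \<dots> = (\<Prod>i\<in>A. emeasure lborel {t. (t - y i) / r \<in> B i})"
    proof (rule emeasure_PiM[OF finA])
      fix i assume i: "i \<in> A"
      have "(\<lambda>t::real. (t - y i) / r) \<in> borel_measurable borel" by simp
      from measurable_sets[OF this] B[OF i] have "(\<lambda>t::real. (t - y i) / r) -` B i \<inter> space borel \<in> sets borel" by simp
      then show "{t. (t - y i) / r \<in> B i} \<in> sets lborel" by (simp add: vimage_def)
    qed
    also have "\<dots> = (\<Prod>i\<in>A. ennreal r * emeasure lborel (B i))"
      using B r by (intro prod.cong refl lborel_affine_preimage) auto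
    finally show ?thesis .
  qed
  fix B :: "'a \<Rightarrow> real set" assume B: "\<And>i. i \<in> A \<Longrightarrow> B i \<in> sets lborel"
  have PB: "Pi\<^sub>E A B \<in> sets L" using B finA by (intro sets_PiM_I_finite) auto
  have "emeasure (density L (\<lambda>_. ennreal (r ^ card A))) (Pi\<^sub>E A B) = ennreal (r ^ card A) * emeasure L (Pi\<^sub>E A B)"
    using PB by (rule emeasure_density_const)
  also have "\<dots> = ennreal (r ^ card A) * (\<Prod>i\<in>A. emeasure lborel (B i))"
    using B by (simp add: emeasure_PiM[OF finA])
  also have "\<dots> = (\<Prod>i\<in>A. ennreal r * emeasure lborel (B i))"
    using r by (simp add: prod.distrib ennreal_power)
  finally show "emeasure (distr L L (T y r)) (Pi\<^sub>E A B) = emeasure (density L (\<lambda>_. ennreal (r ^ card A))) (Pi\<^sub>E A B)"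
    using box B by simp
next
  interpret product_sigma_finite "\<lambda>_. lborel :: real measure" ..
  define C where "C k = Pi\<^sub>E A (\<lambda>_. {- real k .. real k})" for k :: nat
  show "range C \<subseteq> prod_algebra A (\<lambda>_. lborel)"
    unfolding C_def by (auto intro!: prod_algebraI_finite finA)
  show "(\<Union>k. C k) = space L"
  proof safe
    fix f assume f: "f \<in> space L"
    obtain k :: nat where "Max ((\<lambda>i. \<bar>f i\<bar>) ` A) \<le> real k" using real_arch_simple by blast
    then have "\<forall>i\<in>A. \<bar>f i\<bar> \<le> real k" using finA by (meson Max_ge finite_imageI image_eqI order_trans)
    then have "f \<in> C k" using f by (auto simp: C_def space_PiM PiE_def Pi_def abs_le_iff)
    then show "f \<in> (\<Union>k. C k)" by blast
  qed (auto simp: C_def space_PiM)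
  fix k
  have "emeasure (distr L L (T y r)) (C k) = emeasure L (T y r -` C k \<inter> space L)"
    unfolding C_def using finA by (intro emeasure_distr T_meas sets_PiM_I_finite) auto
  also have "T y r -` C k \<inter> space L = Pi\<^sub>E A (\<lambda>i. {y i - r * k .. y i + r * k})"
    using r by (auto simp: C_def T_def space_PiM PiE_def Pi_def extensional_def field_simps)
  also have "emeasure L \<dots> = (\<Prod>i\<in>A. emeasure lborel {y i - r * k .. y i + r * k})"
    by (rule emeasure_PiM[OF finA]) auto
  also have "\<dots> < \<infinity>" using finA by (simp add: ennreal_prod_eq_top less_top[symmetric] emeasure_lborel_Icc_eq)
  finally show "emeasure (distr L L (T y r)) (C k) \<noteq> \<infinity>" by simp
qed

lemma emeasure_ball:
  assumes r: "r > 0"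
  shows "emeasure L (ball y r) = ennreal (r ^ card A) * emeasure L K"
proof -
  have "emeasure L (ball y r) = emeasure L (T y r -` K \<inter> space L)" using ball_eq[OF r] by simp
  also have "\<dots> = emeasure (distr L L (T y r)) K"
    by (rule emeasure_distr[symmetric, OF T_meas K_sets])
  also have "\<dots> = ennreal (r ^ card A) * emeasure L K"
    unfolding distr_T[OF r] by (rule emeasure_density_const) (rule K_sets)
  finally show ?thesis .
qed

lemma K_fin: "emeasure L K < \<infinity>"
proof -
  interpret product_sigma_finite "\<lambda>_. lborel :: real measure" ..
  have "K \<subseteq> Pi\<^sub>E A (\<lambda>_. {-1..1})"
    using p_bound by (auto simp: K_def space_PiM PiE_def Pi_def abs_le_iff)
  then have "emeasure L K \<le> emeasure L (Pi\<^sub>E A (\<lambda>_. {-1..1}))"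
    using finA by (intro emeasure_mono sets_PiM_I_finite) auto
  also have "\<dots> = (\<Prod>i\<in>A. emeasure lborel {-1..1::real})"
    by (rule emeasure_PiM[OF finA]) auto
  also have "\<dots> < \<infinity>" using finA by (simp add: less_top[symmetric] power_eq_top_ennreal)
  finally show ?thesis .
qed

lemma K_pos: "emeasure L K > 0"
proof -
  interpret product_sigma_finite "\<lambda>_. lborel :: real measure" ..
  have "Pi\<^sub>E A (\<lambda>_. {-\<delta>..\<delta>}) \<subseteq> K"
  proof
    fix f assume f: "f \<in> Pi\<^sub>E A (\<lambda>_. {-\<delta>..\<delta>})"
    then have "p f \<le> 1" by (intro p_small) (auto simp: PiE_def Pi_def abs_le_iff)
    then show "f \<in> K" using f by (auto simp: K_def space_PiM PiE_def Pi_def)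
  qed
  then have "emeasure L (Pi\<^sub>E A (\<lambda>_. {-\<delta>..\<delta>})) \<le> emeasure L K"
    by (intro emeasure_mono K_sets)
  moreover have "emeasure L (Pi\<^sub>E A (\<lambda>_. {-\<delta>..\<delta>})) = (\<Prod>i\<in>A. emeasure lborel {-\<delta>..\<delta>})"
    by (rule emeasure_PiM[OF finA]) auto
  moreover have "(\<Prod>i\<in>A. emeasure lborel {-\<delta>..\<delta>}) > 0"
    using \<delta>pos finA by (simp add: ennreal_power)
  ultimately show ?thesis by simp
qed

lemma packing_card:
  assumes eps: "\<epsilon> > 0" and S: "S \<subseteq> K" "finite S"
    and sep: "\<And>y z. y \<in> S \<Longrightarrow> z \<in> S \<Longrightarrow> y \<noteq> z \<Longrightarrow> p (\<lambda>i. y i - z i) > \<epsilon>"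
  shows "real (card S) \<le> (1 + 2 / \<epsilon>) ^ card A"
proof -
  define V where "V = emeasure L K"
  obtain v where v0: "V = ennreal v" "0 \<le> v"
  proof (cases V rule: ennreal_cases)
    case (real r) then show ?thesis using that by blast
  next
    case top then show ?thesis using K_fin unfolding V_def by simp
  qed
  have v: "V = ennreal v" "v > 0" using v0 K_pos unfolding V_def by auto
  have disj: "disjoint_family_on (\<lambda>y. ball y (\<epsilon>/2)) S"
    unfolding disjoint_family_on_def
  proof (intro ballI impI)
    fix y z assume yz: "y \<in> S" "z \<in> S" "y \<noteq> z"
    show "ball y (\<epsilon>/2) \<inter> ball z (\<epsilon>/2) = {}"
    proof (rule ccontr)
      assume "ball y (\<epsilon>/2) \<inter> ball z (\<epsilon>/2) \<noteq> {}"
      then obtain f where f: "p (\<lambda>i. f i - y i) \<le> \<epsilon>/2" "p (\<lambda>i. f i - z i) \<le> \<epsilon>/2"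
        by (auto simp: ball_def)
      have "p (\<lambda>i. y i - z i) \<le> p (\<lambda>i. y i - f i) + p (\<lambda>i. f i - z i)" by (rule p_tri)
      also have "\<dots> \<le> \<epsilon>" using f p_sub_sym[of y f] by simp
      finally show False using sep[OF yz] by simp
    qed
  qed
  have sub: "(\<Union>y\<in>S. ball y (\<epsilon>/2)) \<subseteq> ball (\<lambda>_. 0) (1 + \<epsilon>/2)"
  proof clarify
    fix y f assume y: "y \<in> S" and f: "f \<in> ball y (\<epsilon>/2)"
    have "p (\<lambda>i. f i - 0) \<le> p (\<lambda>i. f i - y i) + p (\<lambda>i. y i - 0)" by (rule p_tri)
    also have "\<dots> \<le> \<epsilon>/2 + 1" using f y S(1) by (intro add_mono) (auto simp: ball_def K_def)
    finally show "f \<in> ball (\<lambda>_. 0) (1 + \<epsilon>/2)" using f by (simp add: ball_def)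
  qed
  have "(\<Sum>y\<in>S. emeasure L (ball y (\<epsilon>/2))) = emeasure L (\<Union>y\<in>S. ball y (\<epsilon>/2))"
    using disj S eps by (intro sum_emeasure) (auto intro: ball_sets)
  also have "\<dots> \<le> emeasure L (ball (\<lambda>_. 0) (1 + \<epsilon>/2))"
    using sub eps by (intro emeasure_mono ball_sets) auto
  finally have "(\<Sum>y\<in>S. ennreal ((\<epsilon>/2) ^ card A) * V) \<le> ennreal ((1 + \<epsilon>/2) ^ card A) * V"
    using eps by (simp add: emeasure_ball V_def)
  moreover have "(\<Sum>y\<in>S. ennreal ((\<epsilon>/2) ^ card A) * V) = ennreal (real (card S) * ((\<epsilon>/2) ^ card A * v))"
  proof -
    have "(\<Sum>y\<in>S. ennreal ((\<epsilon>/2) ^ card A) * V) = of_nat (card S) * (ennreal ((\<epsilon>/2) ^ card A) * ennreal v)"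
      by (simp add: v(1))
    also have "\<dots> = ennreal (real (card S)) * ennreal ((\<epsilon>/2) ^ card A * v)"
      using eps v by (simp add: ennreal_of_nat_eq_real_of_nat ennreal_mult)
    also have "\<dots> = ennreal (real (card S) * ((\<epsilon>/2) ^ card A * v))"
      using eps v by (simp add: ennreal_mult)
    finally show ?thesis .
  qed
  moreover have "ennreal ((1 + \<epsilon>/2) ^ card A) * V = ennreal ((1 + \<epsilon>/2) ^ card A * v)"
    using eps v by (simp add: ennreal_mult)
  ultimately have "ennreal (real (card S) * ((\<epsilon>/2) ^ card A * v)) \<le> ennreal ((1 + \<epsilon>/2) ^ card A * v)"
    by simp
  then have "real (card S) * ((\<epsilon>/2) ^ card A * v) \<le> (1 + \<epsilon>/2) ^ card A * v"
    using eps v by (subst (asm) ennreal_le_iff) auto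
  then have "(real (card S) * (\<epsilon>/2) ^ card A) * v \<le> (1 + \<epsilon>/2) ^ card A * v"
    by (simp add: mult.assoc)
  then have "real (card S) * (\<epsilon>/2) ^ card A \<le> (1 + \<epsilon>/2) ^ card A"
    using v by (meson mult_le_cancel_right_pos)
  then have "real (card S) \<le> (1 + \<epsilon>/2) ^ card A / (\<epsilon>/2) ^ card A"
    using eps by (simp add: pos_le_divide_eq)
  also have "\<dots> = ((1 + \<epsilon>/2) / (\<epsilon>/2)) ^ card A"
    by (rule power_divide[symmetric])
  also have "(1 + \<epsilon>/2) / (\<epsilon>/2) = 1 + 2/\<epsilon>"
    using eps by (simp add: field_simps)
  finally show ?thesis .
qed

lemma net_exists:
  assumes eps: "\<epsilon> > 0"
  shows "\<exists>N. finite N \<and> N \<subseteq> {f. p f \<le> 1} \<and> real (card N) \<le> (1 + 2/\<epsilon>) ^ card A \<and>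
             (\<forall>f. p f \<le> 1 \<longrightarrow> (\<exists>g\<in>N. p (\<lambda>i. f i - g i) \<le> \<epsilon>))"
proof -
  define P where "P = {S. S \<subseteq> K \<and> finite S \<and> (\<forall>y\<in>S. \<forall>z\<in>S. y \<noteq> z \<longrightarrow> p (\<lambda>i. y i - z i) > \<epsilon>)}"
  define B where "B = nat \<lfloor>(1 + 2/\<epsilon>) ^ card A\<rfloor>"
  have cardB: "card S \<le> B" if "S \<in> P" for S
  proof -
    have "real (card S) \<le> (1 + 2/\<epsilon>) ^ card A"
      using that eps by (intro packing_card) (auto simp: P_def)
    then show ?thesis unfolding B_def by linarith
  qed
  have e: "{} \<in> P" unfolding P_def by blast
  have sub: "card ` P \<subseteq> {..B}" using cardB by blast
  have fin: "finite (card ` P)" using finite_subset[OF sub] by simp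
  have ne: "card ` P \<noteq> {}" using e by blast
  define c where "c = Max (card ` P)"
  have "c \<in> card ` P" unfolding c_def by (rule Max_in[OF fin ne])
  then obtain S where S: "S \<in> P" "card S = c" by blast
  have cmax: "card S' \<le> c" if "S' \<in> P" for S'
    unfolding c_def by (rule Max_ge[OF fin]) (use that in blast)
  have cover: "\<exists>g\<in>S. p (\<lambda>i. f i - g i) \<le> \<epsilon>" if f: "p f \<le> 1" for f
  proof -
    define f' where "f' = restrict f A"
    have pf': "p f' = p f" by (rule p_cong) (simp add: f'_def)
    have f'K: "f' \<in> K" using f pf' by (simp add: K_def f'_def space_PiM)
    have eq: "p (\<lambda>i. f i - g i) = p (\<lambda>i. f' i - g i)" for g by (rule p_cong) (simp add: f'_def)
    show ?thesis
    proof (rule ccontr)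
      assume "\<not> ?thesis"
      then have far: "\<forall>g\<in>S. p (\<lambda>i. f' i - g i) > \<epsilon>" by (auto simp: eq not_le)
      have "f' \<notin> S"
      proof
        assume "f' \<in> S"
        with far have "p (\<lambda>i. f' i - f' i) > \<epsilon>" by blast
        then show False using p_zero eps by simp
      qed
      have far2: "\<forall>g\<in>S. p (\<lambda>i. g i - f' i) > \<epsilon>"
      proof
        fix g assume "g \<in> S"
        then have "p (\<lambda>i. f' i - g i) > \<epsilon>" using far by blast
        then show "p (\<lambda>i. g i - f' i) > \<epsilon>" using p_sub_sym[of f' g] by simp
      qed
      have sepS: "\<forall>y\<in>S. \<forall>z\<in>S. y \<noteq> z \<longrightarrow> p (\<lambda>i. y i - z i) > \<epsilon>"
        using S(1) unfolding P_def by simp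
      have sep: "\<forall>y\<in>insert f' S. \<forall>z\<in>insert f' S. y \<noteq> z \<longrightarrow> p (\<lambda>i. y i - z i) > \<epsilon>"
      proof (intro ballI impI)
        fix y z assume y: "y \<in> insert f' S" and z: "z \<in> insert f' S" and yz: "y \<noteq> z"
        show "p (\<lambda>i. y i - z i) > \<epsilon>"
        proof (cases "y = f'")
          case True
          then have "z \<in> S" using z yz by auto
          then show ?thesis using far True by blast
        next
          case False
          then have yS: "y \<in> S" using y by auto
          show ?thesis
          proof (cases "z = f'")
            case True then show ?thesis using far2 yS by blast
          next
            case False then have "z \<in> S" using z by auto
            then show ?thesis using sepS yS yz by blast
          qed
        qed
      qed
      have "insert f' S \<subseteq> K" "finite (insert f' S)" using S(1) f'K unfolding P_def by auto
      then have "insert f' S \<in> P" using sep unfolding P_def by (intro CollectI conjI)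
      then have "card (insert f' S) \<le> c" by (rule cmax)
      moreover have "card (insert f' S) = c + 1"
        using S \<open>f' \<notin> S\<close> by (auto simp: P_def)
      ultimately show False by simp
    qed
  qed
  have SP: "S \<subseteq> K" "finite S" using S(1) by (auto simp: P_def)
  have "real (card S) \<le> (1 + 2/\<epsilon>) ^ card A"
    using S(1) eps by (intro packing_card) (auto simp: P_def)
  moreover have "S \<subseteq> {f. p f \<le> 1}" using SP(1) by (auto simp: K_def)
  ultimately show ?thesis
    using SP(2) cover by blast
qed

end


lemma spec_closed:
  "closed {g :: nat \<times> nat \<Rightarrow> real. spec_norm d k (\<lambda>i j. g (i, j)) \<le> s}"
proof -
  have eq: "{g :: nat \<times> nat \<Rightarrow> real. spec_norm d k (\<lambda>i j. g (i, j)) \<le> s} =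
     (\<Inter>x\<in>{x. L2_set x {..<k} \<le> 1}. {g. L2_set (\<lambda>i. \<Sum>j<k. g (i, j) * x j) {..<d} \<le> s})"
  proof safe
    fix g :: "nat \<times> nat \<Rightarrow> real" and x :: "nat \<Rightarrow> real"
    assume "spec_norm d k (\<lambda>i j. g (i, j)) \<le> s" "L2_set x {..<k} \<le> 1"
    then show "L2_set (\<lambda>i. \<Sum>j<k. g (i, j) * x j) {..<d} \<le> s"
      using spec_upper[of x k "\<lambda>i j. g (i, j)" d] by simp
  next
    fix g :: "nat \<times> nat \<Rightarrow> real"
    assume "g \<in> (\<Inter>x\<in>{x. L2_set x {..<k} \<le> 1}. {g. L2_set (\<lambda>i. \<Sum>j<k. g (i, j) * x j) {..<d} \<le> s})"
    then show "spec_norm d k (\<lambda>i j. g (i, j)) \<le> s"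
      by (intro spec_least) auto
  qed
  have c: "continuous_on UNIV (\<lambda>g :: nat \<times> nat \<Rightarrow> real. L2_set (\<lambda>i. \<Sum>j<k. g (i, j) * x j) {..<d})" for x
    unfolding L2_set_def
    by (intro continuous_intros continuous_on_product_coordinates)
  show ?thesis unfolding eq
    by (intro closed_INT ballI closed_Collect_le c continuous_on_const)
qed

lemma spec_sets:
  fixes d k :: nat
  defines "A \<equiv> {..<d} \<times> {..<k}"
  shows "{f \<in> space (PiM A (\<lambda>_. lborel)). spec_norm d k (\<lambda>i j. f (i, j)) \<le> s} \<in> sets (PiM A (\<lambda>_. lborel :: real measure))"
proof -
  define E where "E f = (\<lambda>x. if x \<in> A then f x else 0 :: real)" for f :: "nat \<times> nat \<Rightarrow> real"
  have Em: "E \<in> measurable (PiM A (\<lambda>_. lborel)) (PiM UNIV (\<lambda>_. borel))"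
    unfolding E_def
  proof (rule measurable_PiM_single')
    fix x :: "nat \<times> nat"
    show "(\<lambda>f. if x \<in> A then f x else 0) \<in> measurable (PiM A (\<lambda>_. lborel)) borel"
    proof (cases "x \<in> A")
      case True
      then have "(\<lambda>f. f x) \<in> measurable (PiM A (\<lambda>_. lborel)) lborel"
        by (rule measurable_component_singleton)
      then show ?thesis using True by (simp add: measurable_lborel1)
    qed simp
  qed auto
  have C: "{g. spec_norm d k (\<lambda>i j. g (i, j)) \<le> s} \<in> sets (PiM UNIV (\<lambda>_. borel :: real measure))"
    unfolding sets_PiM_equal_borel by (rule borel_closed[OF spec_closed])
  have "E -` {g. spec_norm d k (\<lambda>i j. g (i, j)) \<le> s} \<inter> space (PiM A (\<lambda>_. lborel)) \<in> sets (PiM A (\<lambda>_. lborel))"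
    by (rule measurable_sets[OF Em C])
  moreover have "spec_norm d k (\<lambda>i j. E f (i, j)) = spec_norm d k (\<lambda>i j. f (i, j))" for f
    by (rule spec_cong) (simp add: E_def A_def)
  ultimately show ?thesis by (simp add: vimage_def Collect_conj_eq Int_commute)
qed

lemma spec_packing:
  "packing ({..<d} \<times> {..<k}) (\<lambda>f. spec_norm d k (\<lambda>i j. f (i, j))) (1 / (real d * real k + 1))"
proof
  show "finite ({..<d} \<times> {..<k})" by simp
  show "spec_norm d k (\<lambda>i j. f (i, j)) = spec_norm d k (\<lambda>i j. g (i, j))"
    if "\<And>i. i \<in> {..<d} \<times> {..<k} \<Longrightarrow> f i = g i" for f g :: "nat \<times> nat \<Rightarrow> real"
    using that by (intro spec_cong) auto
  show "spec_norm d k (\<lambda>i j. c * f (i, j)) = \<bar>c\<bar> * spec_norm d k (\<lambda>i j. f (i, j))" for c f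
    by (rule spec_scale)
  show "spec_norm d k (\<lambda>i j. f (i, j) + g (i, j)) \<le> spec_norm d k (\<lambda>i j. f (i, j)) + spec_norm d k (\<lambda>i j. g (i, j))" for f g
    by (rule spec_add)
  show "\<bar>f i\<bar> \<le> 1" if H: "spec_norm d k (\<lambda>i j. f (i, j)) \<le> 1" "i \<in> {..<d} \<times> {..<k}" for f i
  proof -
    obtain a b where i: "i = (a, b)" "a < d" "b < k" using H(2) by auto
    show ?thesis using spec_entry[of a d b k "\<lambda>i j. f (i, j)"] H(1) i by simp
  qed
  have pos: "0 < real d * real k + 1"
  proof -
    have "0 \<le> real d * real k" by simp
    then show ?thesis by linarith
  qed
  show "0 < 1 / (real d * real k + 1)" using pos by simp
  show "spec_norm d k (\<lambda>i j. f (i, j)) \<le> 1"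
    if f: "\<And>i. i \<in> {..<d} \<times> {..<k} \<Longrightarrow> \<bar>f i\<bar> \<le> 1 / (real d * real k + 1)" for f
  proof -
    define \<delta> where "\<delta> = 1 / (real d * real k + 1)"
    have \<delta>: "0 < \<delta>" "\<delta> \<le> 1" using pos by (auto simp: \<delta>_def)
    have "(\<Sum>i<d. \<Sum>j<k. (f (i, j))\<^sup>2) \<le> (\<Sum>i<d. \<Sum>j<k. \<delta>\<^sup>2)"
    proof (intro sum_mono)
      fix i j assume "i \<in> {..<d}" "j \<in> {..<k}"
      then have "\<bar>f (i, j)\<bar> \<le> \<delta>" using f by (auto simp: \<delta>_def)
      then show "(f (i, j))\<^sup>2 \<le> \<delta>\<^sup>2" by (metis abs_ge_zero power2_abs power_mono)
    qed
    also have "\<dots> = real d * real k * \<delta>\<^sup>2" by simp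
    also have "\<dots> \<le> (real d * real k + 1) * \<delta> * \<delta>"
      using \<delta> by (simp add: power2_eq_square mult_right_mono)
    also have "\<dots> = \<delta>" using pos by (simp add: \<delta>_def)
    also have "\<dots> \<le> 1" by (rule \<delta>(2))
    finally have "sqrt (\<Sum>i<d. \<Sum>j<k. (f (i, j))\<^sup>2) \<le> 1" by simp
    with spec_frob[of d k "\<lambda>i j. f (i, j)"] show ?thesis by linarith
  qed
  show "{f \<in> space (Pi\<^sub>M ({..<d} \<times> {..<k}) (\<lambda>_. lborel)). spec_norm d k (\<lambda>i j. f (i, j)) \<le> 1}
        \<in> sets (Pi\<^sub>M ({..<d} \<times> {..<k}) (\<lambda>_. lborel))"
    by (rule spec_sets)
qed

lemma spec_net:
  assumes eps: "\<epsilon> > 0"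
  shows "\<exists>N :: (nat \<Rightarrow> nat \<Rightarrow> real) set. finite N \<and> (\<forall>W\<in>N. spec_norm d k W \<le> 1) \<and>
      real (card N) \<le> (1 + 2/\<epsilon>) ^ (d * k) \<and>
      (\<forall>V. spec_norm d k V \<le> 1 \<longrightarrow> (\<exists>W\<in>N. spec_norm d k (\<lambda>i j. V i j - W i j) \<le> \<epsilon>))"
proof -
  interpret packing "{..<d} \<times> {..<k}" "\<lambda>f. spec_norm d k (\<lambda>i j. f (i, j))" "1 / (real d * real k + 1)"
    by (rule spec_packing)
  obtain N where N: "finite N" "N \<subseteq> {f. spec_norm d k (\<lambda>i j. f (i, j)) \<le> 1}"
    "real (card N) \<le> (1 + 2/\<epsilon>) ^ card ({..<d} \<times> {..<k})"
    "\<And>f. spec_norm d k (\<lambda>i j. f (i, j)) \<le> 1 \<Longrightarrow> (\<exists>g\<in>N. spec_norm d k (\<lambda>i j. f (i, j) - g (i, j)) \<le> \<epsilon>)"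
    using net_exists[OF eps] by blast
  define N' where "N' = (\<lambda>g i j. g (i, j)) ` N"
  have "finite N'" using N(1) by (simp add: N'_def)
  moreover have "\<forall>W\<in>N'. spec_norm d k W \<le> 1" using N(2) by (auto simp: N'_def)
  moreover have "real (card N') \<le> (1 + 2/\<epsilon>) ^ (d * k)"
  proof -
    have "card N' \<le> card N" unfolding N'_def by (rule card_image_le[OF N(1)])
    then have "real (card N') \<le> real (card N)" by simp
    also have "\<dots> \<le> (1 + 2/\<epsilon>) ^ (d * k)" using N(3) by (simp add: card_cartesian_product)
    finally show ?thesis .
  qed
  moreover have "\<exists>W\<in>N'. spec_norm d k (\<lambda>i j. V i j - W i j) \<le> \<epsilon>" if V: "spec_norm d k V \<le> 1" for V
  proof -
    have "spec_norm d k (\<lambda>i j. (\<lambda>(a, b). V a b) (i, j)) \<le> 1" using V by simp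
    from N(4)[OF this] obtain g where "g \<in> N" "spec_norm d k (\<lambda>i j. V i j - g (i, j)) \<le> \<epsilon>" by auto
    then show ?thesis by (auto simp: N'_def)
  qed
  ultimately show ?thesis by blast
qed


lemma normal_exp_sq:
  assumes a: "a < 1/2"
  shows "std_normal_density x * exp (a * x\<^sup>2) = (1 / sqrt (1 - 2*a)) * normal_density 0 (1 / sqrt (1 - 2*a)) x"
proof -
  define s where "s = 1 / sqrt (1 - 2*a)"
  have p: "1 - 2*a > 0" using a by simp
  have s2: "s\<^sup>2 = 1 / (1 - 2*a)" using p by (simp add: s_def power_divide)
  have e: "-(x - 0)\<^sup>2 / (2 * s\<^sup>2) = -(x\<^sup>2 / 2) + a * x\<^sup>2"
    using p by (simp add: s2 field_simps)
  have c: "s * (1 / sqrt (2 * pi * s\<^sup>2)) = 1 / sqrt (2 * pi)"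
  proof -
    have "s > 0" using p by (simp add: s_def)
    then have "sqrt (2 * pi * s\<^sup>2) = sqrt (2*pi) * s" by (simp add: real_sqrt_mult)
    then show ?thesis using \<open>s > 0\<close> by simp
  qed
  have "s * normal_density 0 s x = s * (1 / sqrt (2 * pi * s\<^sup>2)) * exp (-(x - 0)\<^sup>2 / (2 * s\<^sup>2))"
    by (simp add: normal_density_def)
  also have "\<dots> = 1 / sqrt (2 * pi) * exp (-(x\<^sup>2 / 2) + a * x\<^sup>2)"
    by (simp only: c e)
  also have "\<dots> = 1 / sqrt (2 * pi) * exp (-(x\<^sup>2 / 2)) * exp (a * x\<^sup>2)"
    by (simp add: mult_exp_exp algebra_simps)
  also have "\<dots> = std_normal_density x * exp (a * x\<^sup>2)"
    by (simp add: std_normal_density_def)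
  finally show ?thesis by (simp add: s_def)
qed

lemma (in prob_space) mgf_sq:
  assumes X: "distributed M lborel X std_normal_density" and a: "a < 1/2"
  shows "(\<integral>\<^sup>+x. ennreal (exp (a * (X x)\<^sup>2)) \<partial>M) = ennreal (1 / sqrt (1 - 2*a))"
proof -
  have p: "1 - 2*a > 0" using a by simp
  have "(\<integral>\<^sup>+x. ennreal (exp (a * (X x)\<^sup>2)) \<partial>M) =
        (\<integral>\<^sup>+x. ennreal (std_normal_density x) * ennreal (exp (a * x\<^sup>2)) \<partial>lborel)"
    by (rule distributed_nn_integral[OF X, symmetric]) simp
  also have "\<dots> = (\<integral>\<^sup>+x. ennreal (1 / sqrt (1 - 2*a)) * ennreal (normal_density 0 (1 / sqrt (1 - 2*a)) x) \<partial>lborel)"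
    using p by (intro nn_integral_cong) (simp add: ennreal_mult'[symmetric] normal_exp_sq[OF a])
  also have "\<dots> = ennreal (1 / sqrt (1 - 2*a)) * (\<integral>\<^sup>+x. ennreal (normal_density 0 (1 / sqrt (1 - 2*a)) x) \<partial>lborel)"
    by (rule nn_integral_cmult) simp
  also have "(\<integral>\<^sup>+x. ennreal (normal_density 0 (1 / sqrt (1 - 2*a)) x) \<partial>lborel) = 1"
  proof -
    have "(\<integral>\<^sup>+x. ennreal (normal_density 0 (1 / sqrt (1 - 2*a)) x) \<partial>lborel) =
          ennreal (integral\<^sup>L lborel (normal_density 0 (1 / sqrt (1 - 2*a))))"
      by (rule nn_integral_eq_integral) (use p in \<open>auto intro: integrable_normal_density\<close>)
    also have "\<dots> = 1" using integral_normal_density[of "1 / sqrt (1 - 2*a)" 0] p by simp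
    finally show ?thesis .
  qed
  finally show ?thesis by simp
qed

lemma (in prob_space) mgf_sum_sq:
  assumes ind: "indep_vars (\<lambda>_. borel) Z {..<n}"
    and Z: "\<And>k. k < n \<Longrightarrow> distributed M lborel (Z k) std_normal_density" and a: "a < 1/2"
  shows "(\<integral>\<^sup>+x. ennreal (exp (a * (\<Sum>k<n. (Z k x)\<^sup>2))) \<partial>M) = ennreal ((1 / sqrt (1 - 2*a)) ^ n)"
proof -
  have "(\<integral>\<^sup>+x. ennreal (exp (a * (\<Sum>k<n. (Z k x)\<^sup>2))) \<partial>M) = (\<integral>\<^sup>+x. (\<Prod>k<n. ennreal (exp (a * (Z k x)\<^sup>2))) \<partial>M)"
    by (simp add: sum_distrib_left exp_sum prod_ennreal)
  also have "\<dots> = (\<Prod>k<n. \<integral>\<^sup>+x. ennreal (exp (a * (Z k x)\<^sup>2)) \<partial>M)"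
    by (intro indep_vars_nn_integral indep_vars_compose2[OF ind]) auto
  also have "\<dots> = (\<Prod>k<n. ennreal (1 / sqrt (1 - 2*a)))"
    using Z a by (intro prod.cong refl mgf_sq) auto
  also have "\<dots> = ennreal ((1 / sqrt (1 - 2*a)) ^ n)"
    using ennreal_power[of "1 / sqrt (1 - 2*a)" n] a by simp
  finally show ?thesis .
qed

lemma inv_sqrt_pow: "y > 0 \<Longrightarrow> (1 / sqrt y) ^ n = exp (- (real n / 2) * ln y)"
proof -
  assume y: "y > 0"
  have "1 / sqrt y = exp (- (1/2) * ln y)"
    using y by (simp add: exp_minus exp_ln ln_sqrt[symmetric] inverse_eq_divide)
  then have "(1 / sqrt y) ^ n = exp (- (1/2) * ln y) ^ n" by simp
  also have "\<dots> = exp (real n * (- (1/2) * ln y))" by (rule exp_of_nat_mult[symmetric])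
  finally show ?thesis by simp
qed

lemma chi_upper_bound:
  assumes s: "0 \<le> s" "s \<le> 1"
  shows "exp (- (s/8) * (real n * (1 + s))) * (1 / sqrt (1 - 2 * (s/8))) ^ n \<le> exp (- real n * s\<^sup>2 / 16)"
proof -
  have y: "1 - 2 * (s/8) > 0" using s by simp
  have l: "- (s/4) - 2 * (s/4)\<^sup>2 \<le> ln (1 - s/4)"
    using s by (intro ln_one_minus_pos_lower_bound) auto
  have eq: "1 - 2 * (s/8) = 1 - s/4" by simp
  have a1: "- (s/8) * (1 + s) = - s/8 - s\<^sup>2/8" by (simp add: power2_eq_square algebra_simps)
  have a2: "(s/4)\<^sup>2 = s\<^sup>2/16" by (simp add: power2_eq_square)
  have u: "- (s/8) * (1 + s) - (1/2) * ln (1 - s/4) \<le> - s\<^sup>2 / 16"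
    unfolding a1 using l a2 by linarith
  have "exp (- (s/8) * (real n * (1 + s))) * (1 / sqrt (1 - 2 * (s/8))) ^ n
      = exp (- (s/8) * (real n * (1 + s))) * exp (- (real n / 2) * ln (1 - s/4))"
    using y by (simp only: inv_sqrt_pow eq)
  also have "\<dots> = exp (- (s/8) * (real n * (1 + s)) + - (real n / 2) * ln (1 - s/4))"
    by (rule mult_exp_exp)
  also have "- (s/8) * (real n * (1 + s)) + - (real n / 2) * ln (1 - s/4) = real n * (- (s/8) * (1 + s) - (1/2) * ln (1 - s/4))"
    by (simp add: algebra_simps)
  also have "real n * (- (s/8) * (1 + s) - (1/2) * ln (1 - s/4)) \<le> real n * (- s\<^sup>2 / 16)"
    by (rule mult_left_mono[OF u]) simp
  finally show ?thesis by simp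
qed

lemma chi_lower_bound:
  assumes s: "0 \<le> s" "s \<le> 1"
  shows "exp ((s/4) * (real n * (1 - s))) * (1 / sqrt (1 - 2 * (- (s/4)))) ^ n \<le> exp (- real n * s\<^sup>2 / 16)"
proof -
  have y: "1 - 2 * (- (s/4)) > 0" using s by simp
  have l: "s/2 - (s/2)\<^sup>2 \<le> ln (1 + s/2)"
    using s by (intro ln_one_plus_pos_lower_bound) auto
  have eq: "1 - 2 * (- (s/4)) = 1 + s/2" by simp
  have a1: "(s/4) * (1 - s) = s/4 - s\<^sup>2/4" by (simp add: power2_eq_square field_simps)
  have a2: "(s/2)\<^sup>2 = s\<^sup>2/4" by (simp add: power2_eq_square)
  have a3: "0 \<le> s\<^sup>2" by simp
  have u: "(s/4) * (1 - s) - (1/2) * ln (1 + s/2) \<le> - s\<^sup>2 / 16"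
    unfolding a1 using l a2 a3 by linarith
  have "exp ((s/4) * (real n * (1 - s))) * (1 / sqrt (1 - 2 * (- (s/4)))) ^ n
      = exp ((s/4) * (real n * (1 - s))) * exp (- (real n / 2) * ln (1 + s/2))"
    using y by (simp only: inv_sqrt_pow eq)
  also have "\<dots> = exp ((s/4) * (real n * (1 - s)) + - (real n / 2) * ln (1 + s/2))"
    by (rule mult_exp_exp)
  also have "(s/4) * (real n * (1 - s)) + - (real n / 2) * ln (1 + s/2) = real n * ((s/4) * (1 - s) - (1/2) * ln (1 + s/2))"
    by (simp add: algebra_simps)
  also have "real n * ((s/4) * (1 - s) - (1/2) * ln (1 + s/2)) \<le> real n * (- s\<^sup>2 / 16)"
    by (rule mult_left_mono[OF u]) simp
  finally show ?thesis by simp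
qed

lemma (in prob_space) chi_upper:
  assumes ind: "indep_vars (\<lambda>_. borel) Z {..<n}"
    and Z: "\<And>k. k < n \<Longrightarrow> distributed M lborel (Z k) std_normal_density"
    and s: "0 < s" "s \<le> 1"
  shows "prob {x \<in> space M. real n * (1 + s) \<le> (\<Sum>k<n. (Z k x)\<^sup>2)} \<le> exp (- real n * s\<^sup>2 / 16)"
proof -
  have [measurable]: "Z k \<in> borel_measurable M" if "k < n" for k
    using distributed_measurable[OF Z[OF that]] by (simp add: measurable_lborel1)
  have m: "(\<lambda>x. (\<Sum>k<n. (Z k x)\<^sup>2) * indicator (space M) x) \<in> borel_measurable M"
    by measurable
  have l: "s/8 > 0" using s by simp
  have "emeasure M {x \<in> space M. real n * (1 + s) \<le> (\<Sum>k<n. (Z k x)\<^sup>2)}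
     \<le> ennreal (exp (- (s/8) * (real n * (1 + s)))) *
         (\<integral>\<^sup>+x. ennreal (exp ((s/8) * (\<Sum>k<n. (Z k x)\<^sup>2))) * indicator (space M) x \<partial>M)"
    by (rule Chernoff_ineq_nn_integral_ge[OF l sets.top m])
  also have "(\<integral>\<^sup>+x. ennreal (exp ((s/8) * (\<Sum>k<n. (Z k x)\<^sup>2))) * indicator (space M) x \<partial>M)
       = (\<integral>\<^sup>+x. ennreal (exp ((s/8) * (\<Sum>k<n. (Z k x)\<^sup>2))) \<partial>M)"
    by (intro nn_integral_cong) (simp add: indicator_def)
  also have "\<dots> = ennreal ((1 / sqrt (1 - 2 * (s/8))) ^ n)"
    using s by (intro mgf_sum_sq ind Z) auto
  also have "ennreal (exp (- (s/8) * (real n * (1 + s)))) * ennreal ((1 / sqrt (1 - 2 * (s/8))) ^ n)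
      = ennreal (exp (- (s/8) * (real n * (1 + s))) * (1 / sqrt (1 - 2 * (s/8))) ^ n)"
    using s by (simp add: ennreal_mult)
  finally have "emeasure M {x \<in> space M. real n * (1 + s) \<le> (\<Sum>k<n. (Z k x)\<^sup>2)}
      \<le> ennreal (exp (- (s/8) * (real n * (1 + s))) * (1 / sqrt (1 - 2 * (s/8))) ^ n)" .
  then have "prob {x \<in> space M. real n * (1 + s) \<le> (\<Sum>k<n. (Z k x)\<^sup>2)}
      \<le> exp (- (s/8) * (real n * (1 + s))) * (1 / sqrt (1 - 2 * (s/8))) ^ n"
    using s by (simp add: emeasure_eq_measure ennreal_le_iff)
  also have "\<dots> \<le> exp (- real n * s\<^sup>2 / 16)"
    using s by (intro chi_upper_bound) auto
  finally show ?thesis .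
qed

lemma (in prob_space) chi_lower:
  assumes ind: "indep_vars (\<lambda>_. borel) Z {..<n}"
    and Z: "\<And>k. k < n \<Longrightarrow> distributed M lborel (Z k) std_normal_density"
    and s: "0 < s" "s \<le> 1"
  shows "prob {x \<in> space M. (\<Sum>k<n. (Z k x)\<^sup>2) \<le> real n * (1 - s)} \<le> exp (- real n * s\<^sup>2 / 16)"
proof -
  have [measurable]: "Z k \<in> borel_measurable M" if "k < n" for k
    using distributed_measurable[OF Z[OF that]] by (simp add: measurable_lborel1)
  have m: "(\<lambda>x. (\<Sum>k<n. (Z k x)\<^sup>2)) \<in> borel_measurable M"
    by measurable
  have l: "s/4 > 0" using s by simp
  have "emeasure M {x \<in> space M. (\<Sum>k<n. (Z k x)\<^sup>2) \<le> real n * (1 - s)}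
     \<le> ennreal (exp ((s/4) * (real n * (1 - s)))) *
         (\<integral>\<^sup>+x. ennreal (exp (- (s/4) * (\<Sum>k<n. (Z k x)\<^sup>2))) * indicator (space M) x \<partial>M)"
    by (rule Chernoff_ineq_nn_integral_le[OF l sets.top m])
  also have "(\<integral>\<^sup>+x. ennreal (exp (- (s/4) * (\<Sum>k<n. (Z k x)\<^sup>2))) * indicator (space M) x \<partial>M)
       = (\<integral>\<^sup>+x. ennreal (exp ((- (s/4)) * (\<Sum>k<n. (Z k x)\<^sup>2))) \<partial>M)"
    by (intro nn_integral_cong) (simp add: indicator_def)
  also have "\<dots> = ennreal ((1 / sqrt (1 - 2 * (- (s/4)))) ^ n)"
    using s by (intro mgf_sum_sq ind Z) auto
  also have "ennreal (exp ((s/4) * (real n * (1 - s)))) * ennreal ((1 / sqrt (1 - 2 * (- (s/4)))) ^ n)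
      = ennreal (exp ((s/4) * (real n * (1 - s))) * (1 / sqrt (1 - 2 * (- (s/4)))) ^ n)"
    using s by (simp add: ennreal_mult)
  finally have "emeasure M {x \<in> space M. (\<Sum>k<n. (Z k x)\<^sup>2) \<le> real n * (1 - s)}
      \<le> ennreal (exp ((s/4) * (real n * (1 - s))) * (1 / sqrt (1 - 2 * (- (s/4)))) ^ n)" .
  then have "prob {x \<in> space M. (\<Sum>k<n. (Z k x)\<^sup>2) \<le> real n * (1 - s)}
      \<le> exp ((s/4) * (real n * (1 - s))) * (1 / sqrt (1 - 2 * (- (s/4)))) ^ n"
    using s by (simp add: emeasure_eq_measure ennreal_le_iff)
  also have "\<dots> \<le> exp (- real n * s\<^sup>2 / 16)"
    using s by (intro chi_lower_bound) auto
  finally show ?thesis .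
qed


definition U :: "nat \<Rightarrow> (nat \<times> nat) set" where "U d = {(i, j). i \<le> j \<and> j < d}"

lemma U_Suc: "U (Suc d) = U d \<union> (\<lambda>i. (i, d)) ` {..d}"
  by (auto simp: U_def less_Suc_eq)

lemma U_finite[simp]: "finite (U d)"
  by (rule finite_subset[of _ "{..<d} \<times> {..<d}"]) (auto simp: U_def)

lemma regroup:
  "(\<Sum>i<d. \<Sum>j<d. g i j) = (\<Sum>(i, j)\<in>U d. if i = j then g i i else g i j + g j i)"
proof (induction d)
  case 0 then show ?case by (simp add: U_def)
next
  case (Suc d)
  have disj: "U d \<inter> (\<lambda>i. (i, d)) ` {..d} = {}" by (auto simp: U_def)
  let ?F = "\<lambda>(i, j). if i = j then g i i else g i j + g j i"
  have e1: "(\<Sum>i<Suc d. \<Sum>j<Suc d. g i j) = (\<Sum>i<d. \<Sum>j<d. g i j) + ((\<Sum>i<d. g i d + g d i) + g d d)"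
    by (simp add: sum.distrib algebra_simps)
  have e2a: "(\<Sum>i<d. g i d + g d i) + g d d = (\<Sum>i\<in>{..d}. if i = d then g d d else g i d + g d i)"
    by (simp add: lessThan_Suc_atMost[symmetric] add.commute)
  have e2b: "(\<Sum>i\<in>{..d}. if i = d then g d d else g i d + g d i) = sum ?F ((\<lambda>i. (i, d)) ` {..d})"
    by (subst sum.reindex) (auto simp: inj_on_def intro!: sum.cong)
  have e3: "sum ?F (U (Suc d)) = sum ?F (U d) + sum ?F ((\<lambda>i. (i, d)) ` {..d})"
    unfolding U_Suc by (rule sum.union_disjoint) (use disj in auto)
  show ?case using e1 e2a e2b e3 Suc.IH by simp
qed

definition sdv :: "nat \<Rightarrow> nat \<Rightarrow> real" where "sdv i j = (if i = j then 1 else sqrt (1/2))"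
definition wC :: "(nat \<Rightarrow> nat \<Rightarrow> real) \<Rightarrow> nat \<Rightarrow> nat \<Rightarrow> real" where
  "wC C i j = (if i = j then C i i else C i j + C j i)"
definition Gk :: "nat \<Rightarrow> (nat \<times> nat \<times> nat \<Rightarrow> real) \<Rightarrow> nat \<Rightarrow> (nat \<Rightarrow> nat \<Rightarrow> real) \<Rightarrow> real" where
  "Gk d \<omega> k C = (\<Sum>(i, j)\<in>U d. wC C i j * \<omega> (k, i, j))"
definition tau2 :: "nat \<Rightarrow> (nat \<Rightarrow> nat \<Rightarrow> real) \<Rightarrow> real" where
  "tau2 d C = (\<Sum>(i, j)\<in>U d. (wC C i j * sdv i j)\<^sup>2)"

lemma sdv_pos: "sdv i j > 0" by (simp add: sdv_def)
lemma sdv_sq: "(sdv i j)\<^sup>2 = (if i = j then 1 else 1/2)" by (simp add: sdv_def)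

lemma frob_goe: "frob d (goe_mat \<omega> k) C = Gk d \<omega> k C"
proof -
  have "frob d (goe_mat \<omega> k) C = (\<Sum>i<d. \<Sum>j<d. \<omega> (k, min i j, max i j) * C i j)"
    by (simp add: frob_def goe_mat_def)
  also have "\<dots> = (\<Sum>(i, j)\<in>U d. if i = j then \<omega> (k, min i i, max i i) * C i i
        else \<omega> (k, min i j, max i j) * C i j + \<omega> (k, min j i, max j i) * C j i)"
    by (rule regroup)
  also have "\<dots> = Gk d \<omega> k C"
    unfolding Gk_def by (intro sum.cong refl) (auto simp: U_def wC_def algebra_simps min_def max_def)
  finally show ?thesis .
qed

lemma frob_sym:
  assumes sym: "\<And>i j. i < d \<Longrightarrow> j < d \<Longrightarrow> A i j = A j i"
  shows "frob d A B = (\<Sum>(i, j)\<in>U d. wC A i j * wC B i j * (sdv i j)\<^sup>2)"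
proof -
  have "frob d A B = (\<Sum>(i, j)\<in>U d. if i = j then A i i * B i i else A i j * B i j + A j i * B j i)"
    unfolding frob_def by (rule regroup)
  also have "\<dots> = (\<Sum>(i, j)\<in>U d. wC A i j * wC B i j * (sdv i j)\<^sup>2)"
  proof (intro sum.cong refl, clarify)
    fix i j assume "(i, j) \<in> U d"
    then have ij: "i \<le> j" "j < d" by (auto simp: U_def)
    show "(if i = j then A i i * B i i else A i j * B i j + A j i * B j i) = wC A i j * wC B i j * (sdv i j)\<^sup>2"
      using sym[of i j] ij by (auto simp: wC_def sdv_sq algebra_simps)
  qed
  finally show ?thesis .
qed

lemma wC_lin: "wC (\<lambda>i j. a * A i j + b * B i j) i j = a * wC A i j + b * wC B i j"
  by (simp add: wC_def algebra_simps)

lemma Gk_lin: "Gk d \<omega> k (\<lambda>i j. a * A i j + b * B i j) = a * Gk d \<omega> k A + b * Gk d \<omega> k B"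
  by (simp add: Gk_def wC_lin case_prod_beta algebra_simps sum.distrib sum_distrib_left)

lemma tau2_nonneg: "0 \<le> tau2 d C"
  by (simp add: tau2_def case_prod_beta sum_nonneg)

lemma tau2_zero:
  assumes "tau2 d C = 0" "(i, j) \<in> U d"
  shows "wC C i j = 0"
proof -
  have "\<forall>x\<in>U d. (case x of (i, j) \<Rightarrow> (wC C i j * sdv i j)\<^sup>2) = 0"
    using assms(1) by (subst sum_nonneg_eq_0_iff[symmetric]) (auto simp: tau2_def)
  then have "(wC C i j * sdv i j)\<^sup>2 = 0" using assms(2) by fastforce
  then show ?thesis using sdv_pos[of i j] by simp
qed

lemma polar_tau2:
  assumes s: "s \<noteq> 0"
  shows "tau2 d (\<lambda>i j. (1/s) * A i j + s * B i j) - tau2 d (\<lambda>i j. (1/s) * A i j + (- s) * B i j)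
     = 4 * (\<Sum>(i, j)\<in>U d. wC A i j * wC B i j * (sdv i j)\<^sup>2)"
  unfolding tau2_def wC_lin
  by (simp add: case_prod_beta sum_subtractf[symmetric] sum_distrib_left power2_eq_square algebra_simps s)

lemma polar_G:
  assumes s: "s \<noteq> 0"
  shows "Gk d \<omega> k A * Gk d \<omega> k B = ((Gk d \<omega> k (\<lambda>i j. (1/s) * A i j + s * B i j))\<^sup>2
          - (Gk d \<omega> k (\<lambda>i j. (1/s) * A i j + (- s) * B i j))\<^sup>2) / 4"
  unfolding Gk_lin using s by (simp add: power2_eq_square algebra_simps)

lemma tau2_le_frob: "tau2 d C \<le> (\<Sum>i<d. \<Sum>j<d. (C i j)\<^sup>2)"
proof -
  have "tau2 d C \<le> (\<Sum>(i, j)\<in>U d. if i = j then (C i i)\<^sup>2 else (C i j)\<^sup>2 + (C j i)\<^sup>2)"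
    unfolding tau2_def
  proof (intro sum_mono, clarify)
    fix i j
    have "(C i j + C j i)\<^sup>2 / 2 \<le> (C i j)\<^sup>2 + (C j i)\<^sup>2"
      using sum_squares_ge_zero[of "C i j - C j i" 0] by (simp add: power2_eq_square algebra_simps)
    then show "(wC C i j * sdv i j)\<^sup>2 \<le> (if i = j then (C i i)\<^sup>2 else (C i j)\<^sup>2 + (C j i)\<^sup>2)"
      by (auto simp: wC_def power_mult_distrib sdv_sq)
  qed
  also have "\<dots> = (\<Sum>i<d. \<Sum>j<d. (C i j)\<^sup>2)" by (rule regroup[symmetric])
  finally show ?thesis .
qed

lemma sq_sum_le: fixes x y :: real shows "(x + y)\<^sup>2 \<le> 2 * x\<^sup>2 + 2 * y\<^sup>2"
proof -
  have "0 \<le> (x - y)\<^sup>2" by simp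
  moreover have "(x + y)\<^sup>2 + (x - y)\<^sup>2 = 2 * x\<^sup>2 + 2 * y\<^sup>2" by (simp add: power2_eq_square algebra_simps)
  ultimately show ?thesis by linarith
qed

lemma tau2_pm_le:
  assumes s: "s > 0"
  shows "tau2 d (\<lambda>i j. (1/s) * A i j + c * B i j) \<le> 2 * tau2 d A / s\<^sup>2 + 2 * c\<^sup>2 * tau2 d B"
proof -
  have "tau2 d (\<lambda>i j. (1/s) * A i j + c * B i j) = (\<Sum>(i, j)\<in>U d. ((1/s) * wC A i j * sdv i j + c * wC B i j * sdv i j)\<^sup>2)"
    unfolding tau2_def wC_lin by (simp add: algebra_simps)
  also have "\<dots> \<le> (\<Sum>(i, j)\<in>U d. 2 * ((1/s) * wC A i j * sdv i j)\<^sup>2 + 2 * (c * wC B i j * sdv i j)\<^sup>2)"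
  proof (intro sum_mono, clarify)
    fix i j
    show "((1/s) * wC A i j * sdv i j + c * wC B i j * sdv i j)\<^sup>2 \<le> 2 * ((1/s) * wC A i j * sdv i j)\<^sup>2 + 2 * (c * wC B i j * sdv i j)\<^sup>2"
      by (rule sq_sum_le)
  qed
  also have "\<dots> = 2 * tau2 d A / s\<^sup>2 + 2 * c\<^sup>2 * tau2 d B"
    unfolding tau2_def
    by (simp add: case_prod_beta sum.distrib sum_distrib_left sum_divide_distrib power_mult_distrib power_divide algebra_simps)
  finally show ?thesis .
qed


lemma PiM_coord_indep:
  assumes M: "\<And>i. i \<in> I \<Longrightarrow> prob_space (M i)" and ne: "I \<noteq> {}"
  shows "prob_space.indep_vars (PiM I M) M (\<lambda>i \<omega>. \<omega> i) I"
proof -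
  interpret prob_space "PiM I M" by (rule prob_space_PiM[OF M])
  have rv: "\<And>i. i \<in> I \<Longrightarrow> random_variable (M i) (\<lambda>\<omega>. \<omega> i)"
    by (rule measurable_component_singleton)
  have "distr (PiM I M) (PiM I M) (\<lambda>x. \<lambda>i\<in>I. x i) = distr (PiM I M) (PiM I M) (\<lambda>x. x)"
    by (intro distr_cong refl) (auto simp: space_PiM PiE_def extensional_def restrict_def fun_eq_iff)
  also have "\<dots> = PiM I M" by simp
  also have "\<dots> = PiM I (\<lambda>i. distr (PiM I M) (M i) (\<lambda>x. x i))"
    by (intro PiM_cong refl distr_PiM_component[symmetric] M) auto
  finally show ?thesis
    by (subst indep_vars_iff_distr_eq_PiM'[OF ne rv]) auto
qed

definition MM :: "nat \<times> nat \<times> nat \<Rightarrow> real measure" where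
  "MM \<alpha> = density lborel (normal_density 0 (sdv (fst (snd \<alpha>)) (snd (snd \<alpha>))))"

lemma goe_eq: "goe_sample_space n d = PiM (goe_index n d) MM"
  unfolding goe_sample_space_def MM_def sdv_def
  by (intro PiM_cong refl) (auto split: prod.split)

lemma MM_prob: "prob_space (MM \<alpha>)"
  unfolding MM_def by (rule prob_space_normal_density) (rule sdv_pos)

lemma goe_prob: "prob_space (goe_sample_space n d)"
  unfolding goe_eq by (rule prob_space_PiM) (rule MM_prob)

lemma goe_index_ne: "n \<ge> 1 \<Longrightarrow> d \<ge> 1 \<Longrightarrow> goe_index n d \<noteq> {}"
  unfolding goe_index_def by (rule ex_in_conv[THEN iffD1], rule exI[of _ "(0, 0, 0)"]) auto

lemma goe_coord_indep:
  assumes "n \<ge> 1" "d \<ge> 1"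
  shows "prob_space.indep_vars (goe_sample_space n d) MM (\<lambda>\<alpha> \<omega>. \<omega> \<alpha>) (goe_index n d)"
  unfolding goe_eq by (rule PiM_coord_indep[OF MM_prob goe_index_ne[OF assms]])

lemma goe_coord_distr:
  assumes "\<alpha> \<in> goe_index n d"
  shows "distributed (goe_sample_space n d) lborel (\<lambda>\<omega>. \<omega> \<alpha>) (normal_density 0 (sdv (fst (snd \<alpha>)) (snd (snd \<alpha>))))"
proof -
  have m: "(\<lambda>\<omega>. \<omega> \<alpha>) \<in> measurable (goe_sample_space n d) (MM \<alpha>)"
    unfolding goe_eq by (rule measurable_component_singleton[OF assms])
  have "distr (goe_sample_space n d) lborel (\<lambda>\<omega>. \<omega> \<alpha>) = distr (goe_sample_space n d) (MM \<alpha>) (\<lambda>\<omega>. \<omega> \<alpha>)"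
    by (intro distr_cong refl) (simp add: MM_def)
  also have "\<dots> = MM \<alpha>"
    unfolding goe_eq by (rule distr_PiM_component[OF MM_prob assms])
  finally show ?thesis
    unfolding distributed_def using m by (auto simp: MM_def measurable_lborel1 cong: measurable_cong_sets)
qed


context
  fixes n d :: nat and C :: "nat \<Rightarrow> nat \<Rightarrow> real"
  assumes n: "n \<ge> 1" and d: "d \<ge> 1"
begin

interpretation P: prob_space "goe_sample_space n d" by (rule goe_prob)

lemma U_in_index: "k < n \<Longrightarrow> (i, j) \<in> U d \<Longrightarrow> (k, i, j) \<in> goe_index n d"
  by (auto simp: U_def goe_index_def)

lemma Gk_meas: "k < n \<Longrightarrow> (\<lambda>\<omega>. Gk d \<omega> k C) \<in> borel_measurable (goe_sample_space n d)"
proof -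
  assume k: "k < n"
  have "(\<lambda>\<omega>. \<omega> (k, i, j)) \<in> borel_measurable (goe_sample_space n d)" if "(i, j) \<in> U d" for i j
  proof -
    have "(\<lambda>\<omega>. \<omega> (k, i, j)) \<in> measurable (goe_sample_space n d) (MM (k, i, j))"
      unfolding goe_eq by (rule measurable_component_singleton[OF U_in_index[OF k that]])
    then show ?thesis by (simp add: MM_def measurable_lborel1 cong: measurable_cong_sets)
  qed
  then show ?thesis unfolding Gk_def
    by (intro borel_measurable_sum) (auto intro!: borel_measurable_times)
qed

lemma Gk_distr:
  assumes k: "k < n" and tpos: "tau2 d C > 0"
  shows "distributed (goe_sample_space n d) lborel (\<lambda>\<omega>. Gk d \<omega> k C) (normal_density 0 (sqrt (tau2 d C)))"
proof -
  define U' where "U' = {p \<in> U d. wC C (fst p) (snd p) \<noteq> 0}"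
  define J where "J = (\<lambda>(i, j). (k, i, j)) ` U'"
  define w where "w \<beta> = wC C (fst (snd \<beta>)) (snd (snd \<beta>))" for \<beta> :: "nat \<times> nat \<times> nat"
  define sd where "sd \<beta> = sdv (fst (snd \<beta>)) (snd (snd \<beta>))" for \<beta> :: "nat \<times> nat \<times> nat"
  have inj: "inj_on (\<lambda>(i, j). (k, i, j)) U'" by (auto simp: inj_on_def)
  have finU': "finite U'" by (rule finite_subset[of _ "U d"]) (auto simp: U'_def)
  have JI: "J \<subseteq> goe_index n d" using k by (auto simp: J_def U'_def intro: U_in_index)
  have finJ: "finite J" using finU' by (simp add: J_def)
  have reJ: "(\<Sum>\<beta>\<in>J. f \<beta>) = (\<Sum>p\<in>U'. f (k, fst p, snd p))" for f :: "nat \<times> nat \<times> nat \<Rightarrow> real"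
    unfolding J_def by (subst sum.reindex[OF inj]) (auto simp: case_prod_beta)
  have reU: "(\<Sum>p\<in>U d. g p) = (\<Sum>p\<in>U'. g p)" if "\<And>p. p \<in> U d \<Longrightarrow> wC C (fst p) (snd p) = 0 \<Longrightarrow> g p = 0" for g :: "nat \<times> nat \<Rightarrow> real"
    by (rule sum.mono_neutral_right) (auto simp: U'_def that)
  have Jne: "J \<noteq> {}"
  proof
    assume "J = {}"
    then have "U' = {}" by (simp add: J_def)
    then have "tau2 d C = 0" unfolding tau2_def
      by (subst reU) (auto simp: case_prod_beta)
    with tpos show False by simp
  qed
  have wne: "w \<beta> \<noteq> 0" if "\<beta> \<in> J" for \<beta> using that by (auto simp: J_def U'_def w_def)
  have ind0: "P.indep_vars MM (\<lambda>\<alpha> \<omega>. \<omega> \<alpha>) J"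
    by (rule P.indep_vars_subset[OF goe_coord_indep[OF n d] JI])
  have ind: "P.indep_vars (\<lambda>_. borel) (\<lambda>\<beta> \<omega>. w \<beta> * \<omega> \<beta>) J"
    by (rule P.indep_vars_compose2[OF ind0]) (simp add: MM_def measurable_lborel1 cong: measurable_cong_sets)
  have dist: "distributed (goe_sample_space n d) lborel (\<lambda>\<omega>. w \<beta> * \<omega> \<beta>) (normal_density 0 (\<bar>w \<beta>\<bar> * sd \<beta>))"
    if "\<beta> \<in> J" for \<beta>
  proof -
    have "distributed (goe_sample_space n d) lborel (\<lambda>\<omega>. 0 + w \<beta> * \<omega> \<beta>) (normal_density (0 + w \<beta> * 0) (\<bar>w \<beta>\<bar> * sd \<beta>))"
      using that JI by (intro P.normal_density_affine) (auto simp: sd_def sdv_pos wne goe_coord_distr)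
    then show ?thesis by simp
  qed
  have "distributed (goe_sample_space n d) lborel (\<lambda>\<omega>. \<Sum>\<beta>\<in>J. w \<beta> * \<omega> \<beta>)
          (normal_density (\<Sum>\<beta>\<in>J. 0) (sqrt (\<Sum>\<beta>\<in>J. (\<bar>w \<beta>\<bar> * sd \<beta>)\<^sup>2)))"
  proof (rule P.sum_indep_normal[OF finJ Jne ind])
    show "0 < \<bar>w \<beta>\<bar> * sd \<beta>" if "\<beta> \<in> J" for \<beta>
      using wne[OF that] sdv_pos by (simp add: sd_def)
    show "distributed (goe_sample_space n d) lborel (\<lambda>\<omega>. w \<beta> * \<omega> \<beta>) (normal_density 0 (\<bar>w \<beta>\<bar> * sd \<beta>))"
      if "\<beta> \<in> J" for \<beta>
      by (rule dist[OF that])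
  qed
  moreover have "(\<lambda>\<omega>. \<Sum>\<beta>\<in>J. w \<beta> * \<omega> \<beta>) = (\<lambda>\<omega>. Gk d \<omega> k C)"
  proof
    fix \<omega> :: "nat \<times> nat \<times> nat \<Rightarrow> real"
    show "(\<Sum>\<beta>\<in>J. w \<beta> * \<omega> \<beta>) = Gk d \<omega> k C"
      unfolding Gk_def reJ by (subst reU) (auto simp: w_def case_prod_beta)
  qed
  moreover have "(\<Sum>\<beta>\<in>J. (\<bar>w \<beta>\<bar> * sd \<beta>)\<^sup>2) = tau2 d C"
    unfolding tau2_def reJ by (subst reU) (auto simp: w_def sd_def case_prod_beta power_mult_distrib)
  ultimately show ?thesis by simp
qed

lemma Z_distr:
  assumes k: "k < n" and tpos: "tau2 d C > 0"
  shows "distributed (goe_sample_space n d) lborel (\<lambda>\<omega>. Gk d \<omega> k C / sqrt (tau2 d C)) std_normal_density"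
proof -
  have "distributed (goe_sample_space n d) lborel (\<lambda>\<omega>. (Gk d \<omega> k C - 0) / sqrt (tau2 d C)) std_normal_density"
    using Gk_distr[OF k tpos] P.normal_standard_normal_convert[of "sqrt (tau2 d C)"] tpos by simp
  then show ?thesis by simp
qed

lemma Z_indep:
  "P.indep_vars (\<lambda>_. borel) (\<lambda>k \<omega>. Gk d \<omega> k C / c) {..<n}"
proof -
  define K where "K k = {\<beta> \<in> goe_index n d. fst \<beta> = k}" for k
  have r: "P.indep_vars (\<lambda>k. PiM (K k) MM) (\<lambda>k \<omega>. restrict (\<lambda>\<alpha>. \<omega> \<alpha>) (K k)) {..<n}"
    by (rule P.indep_vars_restrict[OF goe_coord_indep[OF n d]])
       (auto simp: K_def disjoint_family_on_def)
  have m: "(\<lambda>f. Gk d f k C / c) \<in> measurable (PiM (K k) MM) borel" if k: "k \<in> {..<n}" for k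
  proof -
    have "(\<lambda>f. f (k, i, j)) \<in> borel_measurable (PiM (K k) MM)" if "(i, j) \<in> U d" for i j
    proof -
      have "(k, i, j) \<in> K k" using k that by (auto simp: K_def intro: U_in_index)
      then have "(\<lambda>f. f (k, i, j)) \<in> measurable (PiM (K k) MM) (MM (k, i, j))"
        by (rule measurable_component_singleton)
      then show ?thesis by (simp add: MM_def measurable_lborel1 cong: measurable_cong_sets)
    qed
    then show ?thesis unfolding Gk_def
      by (intro borel_measurable_divide borel_measurable_sum) (auto intro!: borel_measurable_times)
  qed
  have "P.indep_vars (\<lambda>_. borel) (\<lambda>k \<omega>. Gk d (restrict (\<lambda>\<alpha>. \<omega> \<alpha>) (K k)) k C / c) {..<n}"
    by (rule P.indep_vars_compose2[OF r m])
  moreover have "Gk d (restrict (\<lambda>\<alpha>. \<omega> \<alpha>) (K k)) k C = Gk d \<omega> k C" if "k \<in> {..<n}" for k \<omega>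
    unfolding Gk_def using that by (intro sum.cong refl) (auto simp: K_def intro: U_in_index)
  ultimately show ?thesis
    by (subst P.indep_vars_cong[where Y="\<lambda>k \<omega>. Gk d (restrict (\<lambda>\<alpha>. \<omega> \<alpha>) (K k)) k C / c" and N'="\<lambda>_. borel"]) auto
qed

end


context
  fixes n d :: nat and C :: "nat \<Rightarrow> nat \<Rightarrow> real"
  assumes n: "n \<ge> 1" and d: "d \<ge> 1"
begin

interpretation P: prob_space "goe_sample_space n d" by (rule goe_prob)

lemma sumsq_meas: "(\<lambda>\<omega>. \<Sum>k<n. (Gk d \<omega> k C)\<^sup>2) \<in> borel_measurable (goe_sample_space n d)"
  by (intro borel_measurable_sum borel_measurable_power) (use Gk_meas[OF n d] in auto)

lemma dev_sets:
  "{\<omega> \<in> space (goe_sample_space n d). b < \<bar>(\<Sum>k<n. (Gk d \<omega> k C)\<^sup>2) / real n - tau2 d C\<bar>} \<in> P.events"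
proof -
  have [measurable]: "(\<lambda>\<omega>. \<Sum>k<n. (Gk d \<omega> k C)\<^sup>2) \<in> borel_measurable (goe_sample_space n d)"
    by (rule sumsq_meas)
  show ?thesis by measurable
qed

lemma dev_tail:
  assumes t: "0 \<le> t" "t \<le> 1" and Q: "tau2 d C \<le> Q"
  shows "P.prob {\<omega> \<in> space (goe_sample_space n d). t * Q < \<bar>(\<Sum>k<n. (Gk d \<omega> k C)\<^sup>2) / real n - tau2 d C\<bar>}
          \<le> 2 * exp (- real n * t\<^sup>2 / 16)"
proof -
  let ?E = "{\<omega> \<in> space (goe_sample_space n d). t * Q < \<bar>(\<Sum>k<n. (Gk d \<omega> k C)\<^sup>2) / real n - tau2 d C\<bar>}"
  define T where "T = tau2 d C"
  have T0: "0 \<le> T" by (simp add: T_def tau2_nonneg)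
  show ?thesis
  proof (cases "t = 0")
    case True
    have "P.prob ?E \<le> 1" by (rule P.prob_le_1)
    moreover have "2 * exp (- real n * t\<^sup>2 / 16) = 2" using True by simp
    ultimately show ?thesis by linarith
  next
    case False
    then have tpos: "t > 0" using t by simp
    show ?thesis
    proof (cases "T = 0")
      case True
      have "Gk d \<omega> k C = 0" for \<omega> k
        unfolding Gk_def using tau2_zero[of d C] True by (auto simp: T_def intro!: sum.neutral)
      moreover have "0 \<le> t * Q" using t Q T0 True by (simp add: T_def)
      ultimately have E0: "?E = {}" using True by (auto simp: T_def)
      show ?thesis unfolding E0 by simp
    next
      case False
      then have Tpos: "T > 0" using T0 by simp
      define Z where "Z k \<omega> = Gk d \<omega> k C / sqrt T" for k \<omega>
      define s where "s = min 1 (t * Q / T)"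
      have QT: "Q \<ge> T" using Q by (simp add: T_def)
      have s: "0 < s" "s \<le> 1" "t \<le> s" "s * T \<le> t * Q"
      proof -
        have "t * T \<le> t * Q" using QT tpos by (intro mult_left_mono) auto
        then have "t \<le> t * Q / T" using Tpos by (simp add: le_divide_eq)
        then show "t \<le> s" using t by (simp add: s_def)
        then show "0 < s" using tpos by simp
        show "s \<le> 1" by (simp add: s_def)
        have "s \<le> t * Q / T" by (simp add: s_def)
        then show "s * T \<le> t * Q" using Tpos by (simp add: le_divide_eq)
      qed
      have sumZ: "(\<Sum>k<n. (Z k \<omega>)\<^sup>2) = (\<Sum>k<n. (Gk d \<omega> k C)\<^sup>2) / T" for \<omega>
        using Tpos by (simp add: Z_def power_divide sum_divide_distrib)
      have ind: "P.indep_vars (\<lambda>_. borel) Z {..<n}"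
        unfolding Z_def by (rule Z_indep[OF n d])
      have dZ: "distributed (goe_sample_space n d) lborel (Z k) std_normal_density" if "k < n" for k
        unfolding Z_def T_def by (rule Z_distr[OF n d that Tpos[unfolded T_def]])
      define A1 where "A1 = {\<omega> \<in> space (goe_sample_space n d). real n * (1 + s) \<le> (\<Sum>k<n. (Z k \<omega>)\<^sup>2)}"
      define A2 where "A2 = {\<omega> \<in> space (goe_sample_space n d). (\<Sum>k<n. (Z k \<omega>)\<^sup>2) \<le> real n * (1 - s)}"
      have [measurable]: "(\<lambda>\<omega>. \<Sum>k<n. (Gk d \<omega> k C)\<^sup>2) \<in> borel_measurable (goe_sample_space n d)"
        by (rule sumsq_meas)
      have A1s: "A1 \<in> P.events" unfolding A1_def sumZ by measurable
      have A2s: "A2 \<in> P.events" unfolding A2_def sumZ by measurable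
      have nposr: "real n > 0" using n by simp
      have sub: "?E \<subseteq> A1 \<union> A2"
      proof
        fix \<omega> assume w: "\<omega> \<in> ?E"
        define S where "S = (\<Sum>k<n. (Gk d \<omega> k C)\<^sup>2)"
        have "s * T < \<bar>S / real n - T\<bar>" using w s(4) by (simp add: S_def T_def)
        then have "S / real n - T > s * T \<or> T - S / real n > s * T" by linarith
        then show "\<omega> \<in> A1 \<union> A2"
        proof
          assume h: "S / real n - T > s * T"
          then have "S > real n * (T * (1 + s))" using nposr by (simp add: field_simps)
          then have "S / T > real n * (1 + s)" using Tpos by (simp add: field_simps)
          then show ?thesis using w by (simp add: A1_def sumZ S_def)
        next
          assume h: "T - S / real n > s * T"
          then have "S < real n * (T * (1 - s))" using nposr by (simp add: field_simps)
          then have "S / T < real n * (1 - s)" using Tpos by (simp add: field_simps)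
          then show ?thesis using w by (simp add: A2_def sumZ S_def)
        qed
      qed
      have "P.prob ?E \<le> P.prob (A1 \<union> A2)"
        using sub A1s A2s by (intro P.finite_measure_mono) auto
      also have "\<dots> \<le> P.prob A1 + P.prob A2"
        using A1s A2s by (rule measure_Un_le)
      also have "\<dots> \<le> exp (- real n * s\<^sup>2 / 16) + exp (- real n * s\<^sup>2 / 16)"
        unfolding A1_def A2_def
        by (intro add_mono P.chi_upper P.chi_lower ind dZ s(1,2))
      also have "\<dots> \<le> 2 * exp (- real n * t\<^sup>2 / 16)"
      proof -
        have "t\<^sup>2 \<le> s\<^sup>2" using s t by (intro power_mono) auto
        then have "- real n * s\<^sup>2 / 16 \<le> - real n * t\<^sup>2 / 16" by (simp add: mult_left_mono)
        then show ?thesis by simp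
      qed
      finally show ?thesis .
    qed
  qed
qed

end


definition Avw :: "nat \<Rightarrow> (nat \<Rightarrow> nat \<Rightarrow> real) \<Rightarrow> (nat \<Rightarrow> nat \<Rightarrow> real) \<Rightarrow> nat \<Rightarrow> nat \<Rightarrow> real" where
  "Avw r V W = (\<lambda>i j. (\<Sum>l<r. V i l * W j l) + (\<Sum>l<r. W i l * V j l))"
definition Buv :: "(nat \<Rightarrow> nat \<Rightarrow> real) \<Rightarrow> (nat \<Rightarrow> nat \<Rightarrow> real) \<Rightarrow> nat \<Rightarrow> nat \<Rightarrow> real" where
  "Buv U1 U2 = (\<lambda>i j. U1 i 0 * U2 j 0)"
definition Psi :: "nat \<Rightarrow> nat \<Rightarrow> nat \<Rightarrow> (nat \<Rightarrow> nat \<Rightarrow> nat \<Rightarrow> real) \<Rightarrow> (nat \<Rightarrow> nat \<Rightarrow> real)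
   \<Rightarrow> (nat \<Rightarrow> nat \<Rightarrow> real) \<Rightarrow> (nat \<Rightarrow> nat \<Rightarrow> real) \<Rightarrow> (nat \<Rightarrow> nat \<Rightarrow> real) \<Rightarrow> real" where
  "Psi n d r X V W U1 U2 = (\<Sum>i<d. \<Sum>j<d. U1 i 0 * XsX_minus_I n d X (Avw r V W) i j * U2 j 0)"

lemma frob_lin: "frob d X (\<lambda>i j. a * A i j + b * B i j) = a * frob d X A + b * frob d X B"
  by (simp add: frob_def algebra_simps sum.distrib sum_distrib_left)

lemma mop_lin: "XsX_minus_I n d X (\<lambda>i j. a * A i j + b * B i j) i j = a * XsX_minus_I n d X A i j + b * XsX_minus_I n d X B i j"
  by (simp add: XsX_minus_I_def frob_lin algebra_simps sum.distrib sum_distrib_left)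

lemma Avw_lin1: "Avw r (\<lambda>i l. a * V i l + b * V' i l) W = (\<lambda>i j. a * Avw r V W i j + b * Avw r V' W i j)"
  by (simp add: Avw_def algebra_simps sum.distrib sum_distrib_left)

lemma Avw_lin2: "Avw r V (\<lambda>i l. a * W i l + b * W' i l) = (\<lambda>i j. a * Avw r V W i j + b * Avw r V W' i j)"
  by (simp add: Avw_def algebra_simps sum.distrib sum_distrib_left)

lemma Psi_lin1: "Psi n d r X (\<lambda>i l. a * V i l + b * V' i l) W U1 U2 = a * Psi n d r X V W U1 U2 + b * Psi n d r X V' W U1 U2"
  by (simp add: Psi_def Avw_lin1 mop_lin algebra_simps sum.distrib sum_distrib_left)

lemma Psi_lin2: "Psi n d r X V (\<lambda>i l. a * W i l + b * W' i l) U1 U2 = a * Psi n d r X V W U1 U2 + b * Psi n d r X V W' U1 U2"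
  by (simp add: Psi_def Avw_lin2 mop_lin algebra_simps sum.distrib sum_distrib_left)

lemma Psi_lin3: "Psi n d r X V W (\<lambda>i l. a * Y i l + b * Y' i l) U2 = a * Psi n d r X V W Y U2 + b * Psi n d r X V W Y' U2"
  by (simp add: Psi_def algebra_simps sum.distrib sum_distrib_left)

lemma Psi_lin4: "Psi n d r X V W U1 (\<lambda>i l. a * Y i l + b * Y' i l) = a * Psi n d r X V W U1 Y + b * Psi n d r X V W U1 Y'"
  by (simp add: Psi_def algebra_simps sum.distrib sum_distrib_left)

definition FX :: "nat \<Rightarrow> (nat \<Rightarrow> nat \<Rightarrow> real) \<Rightarrow> real" where "FX d Y = (\<Sum>p<d. \<Sum>q<d. \<bar>Y p q\<bar>)"
definition Bnd where
  "Bnd n d r X = (\<Sum>i<d. \<Sum>j<d. (1 / real n) * (\<Sum>k<n. 2 * real r * FX d (X k) * \<bar>X k i j\<bar>) + 2 * real r)"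

lemma Avw_bound:
  assumes V: "spec_norm d r V \<le> 1" and W: "spec_norm d r W \<le> 1" and pq: "p < d" "q < d"
  shows "\<bar>Avw r V W p q\<bar> \<le> 2 * real r"
proof -
  have b: "\<bar>\<Sum>l<r. A p l * B q l\<bar> \<le> real r" if A: "spec_norm d r A \<le> 1" and B: "spec_norm d r B \<le> 1" for A B
  proof -
    have "\<bar>\<Sum>l<r. A p l * B q l\<bar> \<le> (\<Sum>l<r. \<bar>A p l\<bar> * \<bar>B q l\<bar>)"
      by (rule order.trans[OF sum_abs]) (simp add: abs_mult)
    also have "\<dots> \<le> (\<Sum>l<r. 1 * 1)"
    proof (intro sum_mono mult_mono)
      fix l assume "l \<in> {..<r}"
      then show "\<bar>A p l\<bar> \<le> 1" "\<bar>B q l\<bar> \<le> 1"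
        using spec_entry[of p d l r A] spec_entry[of q d l r B] A B pq by auto
    qed auto
    finally show ?thesis by simp
  qed
  have "\<bar>Avw r V W p q\<bar> \<le> \<bar>\<Sum>l<r. V p l * W q l\<bar> + \<bar>\<Sum>l<r. W p l * V q l\<bar>"
    unfolding Avw_def by (rule abs_triangle_ineq)
  also have "\<dots> \<le> real r + real r" using b[OF V W] b[OF W V] by (rule add_mono)
  finally show ?thesis by simp
qed

lemma frob_bound:
  assumes "\<And>p q. p < d \<Longrightarrow> q < d \<Longrightarrow> \<bar>A p q\<bar> \<le> c"
  shows "\<bar>frob d Y A\<bar> \<le> c * FX d Y"
proof -
  have "\<bar>frob d Y A\<bar> \<le> (\<Sum>p<d. \<Sum>q<d. \<bar>Y p q\<bar> * \<bar>A p q\<bar>)"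
    unfolding frob_def
    by (rule order.trans[OF sum_abs], rule sum_mono, rule order.trans[OF sum_abs]) (simp add: abs_mult)
  also have "\<dots> \<le> (\<Sum>p<d. \<Sum>q<d. \<bar>Y p q\<bar> * c)"
    using assms by (intro sum_mono mult_left_mono) auto
  also have "\<dots> = c * FX d Y" by (simp add: FX_def sum_distrib_left sum_distrib_right mult.commute)
  finally show ?thesis .
qed

lemma Psi_bound:
  assumes V: "spec_norm d r V \<le> 1" and W: "spec_norm d r W \<le> 1"
    and U1: "spec_norm d 1 U1 \<le> 1" and U2: "spec_norm d 1 U2 \<le> 1"
  shows "\<bar>Psi n d r X V W U1 U2\<bar> \<le> Bnd n d r X"
proof -
  define A where "A = Avw r V W"
  have Ab: "\<And>p q. p < d \<Longrightarrow> q < d \<Longrightarrow> \<bar>A p q\<bar> \<le> 2 * real r"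
    unfolding A_def using Avw_bound[OF V W] by blast
  have u1: "\<bar>U1 i 0\<bar> \<le> 1" if "i < d" for i using spec_entry[of i d 0 1 U1] U1 that by simp
  have u2: "\<bar>U2 i 0\<bar> \<le> 1" if "i < d" for i using spec_entry[of i d 0 1 U2] U2 that by simp
  have mb: "\<bar>XsX_minus_I n d X A i j\<bar> \<le> (1 / real n) * (\<Sum>k<n. 2 * real r * FX d (X k) * \<bar>X k i j\<bar>) + 2 * real r"
    if ij: "i < d" "j < d" for i j
  proof -
    have "\<bar>XsX_minus_I n d X A i j\<bar> \<le> \<bar>(1 / real n) * (\<Sum>k<n. frob d (X k) A * X k i j)\<bar> + \<bar>A i j\<bar>"
      unfolding XsX_minus_I_def by (rule abs_triangle_ineq4)
    also have "\<bar>(1 / real n) * (\<Sum>k<n. frob d (X k) A * X k i j)\<bar> \<le> (1 / real n) * (\<Sum>k<n. 2 * real r * FX d (X k) * \<bar>X k i j\<bar>)"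
    proof -
      have "\<bar>\<Sum>k<n. frob d (X k) A * X k i j\<bar> \<le> (\<Sum>k<n. \<bar>frob d (X k) A\<bar> * \<bar>X k i j\<bar>)"
        by (rule order.trans[OF sum_abs]) (simp add: abs_mult)
      also have "\<dots> \<le> (\<Sum>k<n. 2 * real r * FX d (X k) * \<bar>X k i j\<bar>)"
        by (intro sum_mono mult_right_mono frob_bound Ab) auto
      finally show ?thesis by (simp add: abs_mult divide_right_mono)
    qed
    finally show ?thesis using Ab[OF ij] by linarith
  qed
  have "\<bar>Psi n d r X V W U1 U2\<bar> \<le> (\<Sum>i<d. \<Sum>j<d. \<bar>U1 i 0\<bar> * \<bar>XsX_minus_I n d X A i j\<bar> * \<bar>U2 j 0\<bar>)"
    unfolding Psi_def A_def[symmetric]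
    by (rule order.trans[OF sum_abs], rule sum_mono, rule order.trans[OF sum_abs]) (simp add: abs_mult)
  also have "\<dots> \<le> (\<Sum>i<d. \<Sum>j<d. 1 * \<bar>XsX_minus_I n d X A i j\<bar> * 1)"
    using u1 u2 by (intro sum_mono mult_mono) auto
  also have "\<dots> \<le> Bnd n d r X"
    unfolding Bnd_def using mb by (intro sum_mono) auto
  finally show ?thesis .
qed

lemma Psi_scale1: "Psi n d r X (\<lambda>i l. c * V i l) W U1 U2 = c * Psi n d r X V W U1 U2"
  using Psi_lin1[of n d r X c V 0 V W U1 U2] by simp
lemma Psi_scale2: "Psi n d r X V (\<lambda>i l. c * W i l) U1 U2 = c * Psi n d r X V W U1 U2"
  using Psi_lin2[of n d r X V c W 0 W U1 U2] by simp
lemma Psi_scale3: "Psi n d r X V W (\<lambda>i l. c * U1 i l) U2 = c * Psi n d r X V W U1 U2"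
  using Psi_lin3[of n d r X V W c U1 0 U1 U2] by simp
lemma Psi_scale4: "Psi n d r X V W U1 (\<lambda>i l. c * U2 i l) = c * Psi n d r X V W U1 U2"
  using Psi_lin4[of n d r X V W U1 c U2 0 U2] by simp

lemma Psi_diff1: "Psi n d r X V W U1 U2 - Psi n d r X V' W U1 U2 = Psi n d r X (\<lambda>i l. V i l - V' i l) W U1 U2"
  using Psi_lin1[of n d r X 1 V "-1" V' W U1 U2] by simp
lemma Psi_diff2: "Psi n d r X V W U1 U2 - Psi n d r X V W' U1 U2 = Psi n d r X V (\<lambda>i l. W i l - W' i l) U1 U2"
  using Psi_lin2[of n d r X V 1 W "-1" W' U1 U2] by simp
lemma Psi_diff3: "Psi n d r X V W U1 U2 - Psi n d r X V W U1' U2 = Psi n d r X V W (\<lambda>i l. U1 i l - U1' i l) U2"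
  using Psi_lin3[of n d r X V W 1 U1 "-1" U1' U2] by simp
lemma Psi_diff4: "Psi n d r X V W U1 U2 - Psi n d r X V W U1 U2' = Psi n d r X V W U1 (\<lambda>i l. U2 i l - U2' i l)"
  using Psi_lin4[of n d r X V W U1 1 U2 "-1" U2'] by simp

lemma spec_zero: "spec_norm m k (\<lambda>i j. 0) \<le> 1"
  using spec_frob[of m k "\<lambda>i j. 0"] by simp

lemma bootstrap:
  assumes NVb: "\<forall>V0\<in>NV. spec_norm d r V0 \<le> 1" and NUb: "\<forall>U0\<in>NU. spec_norm d 1 U0 \<le> 1"
    and NVc: "\<forall>V. spec_norm d r V \<le> 1 \<longrightarrow> (\<exists>V0\<in>NV. spec_norm d r (\<lambda>i j. V i j - V0 i j) \<le> 1/8)"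
    and NUc: "\<forall>U. spec_norm d 1 U \<le> 1 \<longrightarrow> (\<exists>U0\<in>NU. spec_norm d 1 (\<lambda>i j. U i j - U0 i j) \<le> 1/8)"
    and netb: "\<forall>V0\<in>NV. \<forall>W0\<in>NV. \<forall>U0\<in>NU. \<forall>U0'\<in>NU. \<bar>Psi n d r X V0 W0 U0 U0'\<bar> \<le> b"
    and V: "spec_norm d r V \<le> 1" and W: "spec_norm d r W \<le> 1"
    and U1: "spec_norm d 1 U1 \<le> 1" and U2: "spec_norm d 1 U2 \<le> 1"
  shows "\<bar>Psi n d r X V W U1 U2\<bar> \<le> 2 * b"
proof -
  define Sset where "Sset = {\<bar>Psi n d r X V W U1 U2\<bar> | V W U1 U2. spec_norm d r V \<le> 1 \<and> spec_norm d r W \<le> 1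
      \<and> spec_norm d 1 U1 \<le> 1 \<and> spec_norm d 1 U2 \<le> 1}"
  have bdd: "bdd_above Sset"
    unfolding Sset_def by (rule bdd_aboveI[where M="Bnd n d r X"]) (auto intro: Psi_bound)
  have ne: "Sset \<noteq> {}"
    unfolding Sset_def using spec_zero[of d r] spec_zero[of d 1] by blast
  define S where "S = Sup Sset"
  have upper: "\<bar>Psi n d r X V W U1 U2\<bar> \<le> S" if "spec_norm d r V \<le> 1" "spec_norm d r W \<le> 1"
      "spec_norm d 1 U1 \<le> 1" "spec_norm d 1 U2 \<le> 1" for V W U1 U2
    unfolding S_def by (rule cSup_upper[OF _ bdd]) (use that in \<open>auto simp: Sset_def\<close>)
  have small: "\<bar>Psi n d r X V W U1 U2\<bar> \<le> S / 8" if "spec_norm d r V \<le> 1/8" "spec_norm d r W \<le> 1"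
      "spec_norm d 1 U1 \<le> 1" "spec_norm d 1 U2 \<le> 1" for V W U1 U2
  proof -
    have "spec_norm d r (\<lambda>i l. 8 * V i l) \<le> 1" using that(1) by (simp add: spec_scale)
    then have "\<bar>Psi n d r X (\<lambda>i l. 8 * V i l) W U1 U2\<bar> \<le> S" using that by (intro upper) auto
    then show ?thesis by (simp add: Psi_scale1)
  qed
  have small2: "\<bar>Psi n d r X V W U1 U2\<bar> \<le> S / 8" if "spec_norm d r V \<le> 1" "spec_norm d r W \<le> 1/8"
      "spec_norm d 1 U1 \<le> 1" "spec_norm d 1 U2 \<le> 1" for V W U1 U2
  proof -
    have "spec_norm d r (\<lambda>i l. 8 * W i l) \<le> 1" using that(2) by (simp add: spec_scale)
    then have "\<bar>Psi n d r X V (\<lambda>i l. 8 * W i l) U1 U2\<bar> \<le> S" using that by (intro upper) auto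
    then show ?thesis by (simp add: Psi_scale2)
  qed
  have small3: "\<bar>Psi n d r X V W U1 U2\<bar> \<le> S / 8" if "spec_norm d r V \<le> 1" "spec_norm d r W \<le> 1"
      "spec_norm d 1 U1 \<le> 1/8" "spec_norm d 1 U2 \<le> 1" for V W U1 U2
  proof -
    have "spec_norm d 1 (\<lambda>i l. 8 * U1 i l) \<le> 1" using that(3) by (simp add: spec_scale)
    then have "\<bar>Psi n d r X V W (\<lambda>i l. 8 * U1 i l) U2\<bar> \<le> S" using that by (intro upper) auto
    then show ?thesis by (simp add: Psi_scale3)
  qed
  have small4: "\<bar>Psi n d r X V W U1 U2\<bar> \<le> S / 8" if "spec_norm d r V \<le> 1" "spec_norm d r W \<le> 1"
      "spec_norm d 1 U1 \<le> 1" "spec_norm d 1 U2 \<le> 1/8" for V W U1 U2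
  proof -
    have "spec_norm d 1 (\<lambda>i l. 8 * U2 i l) \<le> 1" using that(4) by (simp add: spec_scale)
    then have "\<bar>Psi n d r X V W U1 (\<lambda>i l. 8 * U2 i l)\<bar> \<le> S" using that by (intro upper) auto
    then show ?thesis by (simp add: Psi_scale4)
  qed
  have key: "\<bar>Psi n d r X V W U1 U2\<bar> \<le> b + S / 2" if H: "spec_norm d r V \<le> 1" "spec_norm d r W \<le> 1"
      "spec_norm d 1 U1 \<le> 1" "spec_norm d 1 U2 \<le> 1" for V W U1 U2
  proof -
    obtain V0 where V0: "V0 \<in> NV" "spec_norm d r (\<lambda>i j. V i j - V0 i j) \<le> 1/8" using NVc H(1) by blast
    obtain W0 where W0: "W0 \<in> NV" "spec_norm d r (\<lambda>i j. W i j - W0 i j) \<le> 1/8" using NVc H(2) by blast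
    obtain Y1 where Y1: "Y1 \<in> NU" "spec_norm d 1 (\<lambda>i j. U1 i j - Y1 i j) \<le> 1/8" using NUc H(3) by blast
    obtain Y2 where Y2: "Y2 \<in> NU" "spec_norm d 1 (\<lambda>i j. U2 i j - Y2 i j) \<le> 1/8" using NUc H(4) by blast
    have v0: "spec_norm d r V0 \<le> 1" using NVb V0 by blast
    have w0: "spec_norm d r W0 \<le> 1" using NVb W0 by blast
    have y1: "spec_norm d 1 Y1 \<le> 1" using NUb Y1 by blast
    have y2: "spec_norm d 1 Y2 \<le> 1" using NUb Y2 by blast
    have eq: "Psi n d r X V W U1 U2 = Psi n d r X V0 W0 Y1 Y2
       + Psi n d r X (\<lambda>i l. V i l - V0 i l) W U1 U2
       + Psi n d r X V0 (\<lambda>i l. W i l - W0 i l) U1 U2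
       + Psi n d r X V0 W0 (\<lambda>i l. U1 i l - Y1 i l) U2
       + Psi n d r X V0 W0 Y1 (\<lambda>i l. U2 i l - Y2 i l)"
      unfolding Psi_diff1[symmetric] Psi_diff2[symmetric] Psi_diff3[symmetric] Psi_diff4[symmetric]
      by simp
    have "\<bar>Psi n d r X V W U1 U2\<bar> \<le> \<bar>Psi n d r X V0 W0 Y1 Y2\<bar>
       + \<bar>Psi n d r X (\<lambda>i l. V i l - V0 i l) W U1 U2\<bar>
       + \<bar>Psi n d r X V0 (\<lambda>i l. W i l - W0 i l) U1 U2\<bar>
       + \<bar>Psi n d r X V0 W0 (\<lambda>i l. U1 i l - Y1 i l) U2\<bar>
       + \<bar>Psi n d r X V0 W0 Y1 (\<lambda>i l. U2 i l - Y2 i l)\<bar>"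
      unfolding eq by linarith
    also have "\<dots> \<le> b + S/8 + S/8 + S/8 + S/8"
      using netb V0(1) W0(1) Y1(1) Y2(1)
        small[OF V0(2) H(2) H(3) H(4)] small2[OF v0 W0(2) H(3) H(4)]
        small3[OF v0 w0 Y1(2) H(4)] small4[OF v0 w0 y1 Y2(2)]
      by (intro add_mono) auto
    finally show ?thesis by simp
  qed
  have "Sup Sset \<le> b + S / 2"
    by (rule cSup_least[OF ne]) (use key in \<open>auto simp: Sset_def\<close>)
  then have "S \<le> b + S / 2" by (simp only: S_def[symmetric])
  then have "S \<le> 2 * b" by simp
  then show ?thesis using upper[OF V W U1 U2] by simp
qed

lemma spec_col: "spec_norm d 1 (\<lambda>i j. x i) \<le> L2_set x {..<d}"
  using spec_frob[of d 1 "\<lambda>i j. x i"] by (simp add: L2_set_def)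

lemma spec_from_Psi:
  assumes H: "\<And>U1 U2. spec_norm d 1 U1 \<le> 1 \<Longrightarrow> spec_norm d 1 U2 \<le> 1 \<Longrightarrow> \<bar>Psi n d r X V V U1 U2\<bar> \<le> 2 * b"
  shows "spec_norm d d (XsX_minus_I n d X (outer_VVt r V)) \<le> b"
proof -
  define M where "M = XsX_minus_I n d X (outer_VVt r V)"
  have AV: "Avw r V V = (\<lambda>i j. 2 * outer_VVt r V i j + 0 * outer_VVt r V i j)"
    by (simp add: Avw_def outer_VVt_def fun_eq_iff mult.commute)
  have PsiM: "Psi n d r X V V U1 U2 = 2 * (\<Sum>i<d. \<Sum>j<d. U1 i 0 * M i j * U2 j 0)" for U1 U2
    unfolding Psi_def AV mop_lin M_def by (simp add: sum_distrib_left algebra_simps)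
  have b0: "0 \<le> b"
    using H[OF spec_zero spec_zero] by (simp add: Psi_def)
  show ?thesis
    unfolding M_def[symmetric]
  proof (rule spec_least)
    fix x :: "nat \<Rightarrow> real" assume x: "L2_set x {..<d} \<le> 1"
    define y where "y = (\<lambda>i. \<Sum>j<d. M i j * x j)"
    have "L2_set y {..<d} \<le> b"
    proof (cases "L2_set y {..<d} = 0")
      case True then show ?thesis using b0 by simp
    next
      case False
      define c where "c = L2_set y {..<d}"
      have c: "c > 0" using False L2_set_nonneg[of y "{..<d}"] unfolding c_def by linarith
      define u where "u = (\<lambda>i. y i / c)"
      have u1: "L2_set u {..<d} = 1" using c by (simp add: u_def L2_set_div c_def)
      have s1: "spec_norm d 1 (\<lambda>i j. u i) \<le> 1" using spec_col[of d u] u1 by simp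
      have s2: "spec_norm d 1 (\<lambda>i j. x i) \<le> 1" using spec_col[of d x] x by simp
      have "(\<Sum>i<d. \<Sum>j<d. u i * M i j * x j) = (\<Sum>i<d. u i * y i)"
        by (simp add: y_def sum_distrib_left mult.assoc)
      also have "\<dots> = (\<Sum>i<d. (y i)\<^sup>2) / c" by (simp add: u_def power2_eq_square sum_divide_distrib)
      also have "(\<Sum>i<d. (y i)\<^sup>2) = c\<^sup>2" by (simp add: c_def L2_set_def sum_nonneg)
      also have "c\<^sup>2 / c = c" using c by (simp add: power2_eq_square)
      finally have e: "(\<Sum>i<d. \<Sum>j<d. u i * M i j * x j) = c" .
      have "2 * c \<le> \<bar>Psi n d r X V V (\<lambda>i j. u i) (\<lambda>i j. x i)\<bar>"
        unfolding PsiM using e by simp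
      also have "\<dots> \<le> 2 * b" by (rule H[OF s1 s2])
      finally show ?thesis by (simp add: c_def)
    qed
    then show "L2_set (\<lambda>i. \<Sum>j<d. M i j * x j) {..<d} \<le> b" by (simp add: y_def)
  qed
qed

lemma Psi_frob:
  "Psi n d r X V W U1 U2 = (1 / real n) * (\<Sum>k<n. frob d (X k) (Avw r V W) * frob d (X k) (Buv U1 U2))
      - frob d (Avw r V W) (Buv U1 U2)"
proof -
  define A where "A = Avw r V W"
  define F where "F k = frob d (X k) A" for k
  have "Psi n d r X V W U1 U2 = (\<Sum>i<d. \<Sum>j<d. (1 / real n) * (\<Sum>k<n. F k * (X k i j * (U1 i 0 * U2 j 0))) - A i j * (U1 i 0 * U2 j 0))"
    unfolding Psi_def XsX_minus_I_def A_def[symmetric] F_def[symmetric]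
    by (intro sum.cong refl) (simp add: algebra_simps sum_distrib_left sum_distrib_right)
  also have "\<dots> = (1 / real n) * (\<Sum>i<d. \<Sum>j<d. \<Sum>k<n. F k * (X k i j * (U1 i 0 * U2 j 0))) - (\<Sum>i<d. \<Sum>j<d. A i j * (U1 i 0 * U2 j 0))"
    by (simp add: sum_subtractf sum_distrib_left)
  also have "(\<Sum>i<d. \<Sum>j<d. \<Sum>k<n. F k * (X k i j * (U1 i 0 * U2 j 0))) = (\<Sum>k<n. \<Sum>i<d. \<Sum>j<d. F k * (X k i j * (U1 i 0 * U2 j 0)))"
  proof -
    have "(\<Sum>i<d. \<Sum>j<d. \<Sum>k<n. F k * (X k i j * (U1 i 0 * U2 j 0))) = (\<Sum>i<d. \<Sum>k<n. \<Sum>j<d. F k * (X k i j * (U1 i 0 * U2 j 0)))"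
    proof (rule sum.cong[OF refl])
      fix i show "(\<Sum>j<d. \<Sum>k<n. F k * (X k i j * (U1 i 0 * U2 j 0))) = (\<Sum>k<n. \<Sum>j<d. F k * (X k i j * (U1 i 0 * U2 j 0)))"
        by (rule sum.swap)
    qed
    also have "\<dots> = (\<Sum>k<n. \<Sum>i<d. \<Sum>j<d. F k * (X k i j * (U1 i 0 * U2 j 0)))"
      by (rule sum.swap)
    finally show ?thesis .
  qed
  also have "\<dots> = (\<Sum>k<n. F k * frob d (X k) (Buv U1 U2))"
    by (simp add: frob_def Buv_def sum_distrib_left)
  also have "(\<Sum>i<d. \<Sum>j<d. A i j * (U1 i 0 * U2 j 0)) = frob d A (Buv U1 U2)"
    by (simp add: frob_def Buv_def)
  finally show ?thesis by (simp add: F_def A_def)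
qed

lemma aux_alg: fixes x a b c e m :: real
  assumes h: "x = (1/m) * ((a - b)/4) - (c - e)/4"
  shows "x = ((a/m - c) - (b/m - e))/4"
proof -
  have "((a/m - c) - (b/m - e))/4 = (1/m) * ((a - b)/4) - (c - e)/4"
    by (cases "m = 0") (simp_all add: field_simps)
  then show ?thesis using h by simp
qed

lemma Avw_sym: "Avw r V W i j = Avw r V W j i"
  by (simp add: Avw_def mult.commute add.commute)

lemma Psi_polar:
  fixes r n d :: nat and V W U1 U2 :: "nat \<Rightarrow> nat \<Rightarrow> real" and s :: real and \<omega> :: "nat \<times> nat \<times> nat \<Rightarrow> real"
  assumes s: "s \<noteq> 0"
  defines "Cp \<equiv> (\<lambda>i j. (1/s) * Avw r V W i j + s * Buv U1 U2 i j)"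
    and "Cm \<equiv> (\<lambda>i j. (1/s) * Avw r V W i j + (- s) * Buv U1 U2 i j)"
  shows "Psi n d r (goe_mat \<omega>) V W U1 U2 =
     (((\<Sum>k<n. (Gk d \<omega> k Cp)\<^sup>2) / real n - tau2 d Cp) - ((\<Sum>k<n. (Gk d \<omega> k Cm)\<^sup>2) / real n - tau2 d Cm)) / 4"
proof -
  have "Psi n d r (goe_mat \<omega>) V W U1 U2 = (1 / real n) * (\<Sum>k<n. Gk d \<omega> k (Avw r V W) * Gk d \<omega> k (Buv U1 U2))
      - frob d (Avw r V W) (Buv U1 U2)"
    unfolding Psi_frob frob_goe ..
  also have "(\<Sum>k<n. Gk d \<omega> k (Avw r V W) * Gk d \<omega> k (Buv U1 U2)) = (\<Sum>k<n. ((Gk d \<omega> k Cp)\<^sup>2 - (Gk d \<omega> k Cm)\<^sup>2) / 4)"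
    unfolding Cp_def Cm_def by (intro sum.cong refl polar_G s)
  also have "frob d (Avw r V W) (Buv U1 U2) = (tau2 d Cp - tau2 d Cm) / 4"
    unfolding Cp_def Cm_def polar_tau2[OF s] by (subst frob_sym) (auto intro: Avw_sym)
  also have "(\<Sum>k<n. ((Gk d \<omega> k Cp)\<^sup>2 - (Gk d \<omega> k Cm)\<^sup>2) / 4) = ((\<Sum>k<n. (Gk d \<omega> k Cp)\<^sup>2) - (\<Sum>k<n. (Gk d \<omega> k Cm)\<^sup>2)) / 4"
    by (simp add: sum_subtractf sum_divide_distrib[symmetric])
  finally show ?thesis by (rule aux_alg)
qed

lemma L2_le1_sum: "L2_set f A \<le> 1 \<Longrightarrow> (\<Sum>i\<in>A. (f i)\<^sup>2) \<le> 1"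
  unfolding L2_set_def by (simp add: sum_nonneg)

lemma col_sq:
  assumes W: "spec_norm m k W \<le> 1" and l: "l < k"
  shows "(\<Sum>i<m. (W i l)\<^sup>2) \<le> 1"
proof -
  let ?x = "\<lambda>j. if j = l then 1 else 0 :: real"
  have x: "L2_set ?x {..<k} \<le> 1"
  proof -
    have "(\<Sum>j<k. (?x j)\<^sup>2) = (\<Sum>j<k. ?x j)" by (rule sum.cong) auto
    also have "\<dots> = 1" using l by simp
    finally show ?thesis by (simp add: L2_set_def)
  qed
  have e: "(\<lambda>i. \<Sum>j<k. W i j * ?x j) = (\<lambda>i. W i l)"
  proof
    fix i
    have "(\<Sum>j<k. W i j * ?x j) = (\<Sum>j<k. if j = l then W i j else 0)" by (rule sum.cong) auto
    then show "(\<Sum>j<k. W i j * ?x j) = W i l" using l by simp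
  qed
  have "L2_set (\<lambda>i. W i l) {..<m} \<le> 1"
    using spec_upper[OF x, of W m] W e by simp
  then show ?thesis by (rule L2_le1_sum)
qed

lemma prod_sq_bound:
  assumes V: "spec_norm d r V \<le> 1" and W: "spec_norm d r W \<le> 1"
  shows "(\<Sum>i<d. \<Sum>j<d. (\<Sum>l<r. V i l * W j l)\<^sup>2) \<le> real r"
proof -
  have "(\<Sum>i<d. \<Sum>j<d. (\<Sum>l<r. V i l * W j l)\<^sup>2) = (\<Sum>j<d. \<Sum>i<d. (\<Sum>l<r. V i l * W j l)\<^sup>2)"
    by (rule sum.swap)
  also have "\<dots> \<le> (\<Sum>j<d. \<Sum>l<r. (W j l)\<^sup>2)"
  proof (rule sum_mono)
    fix j
    have "L2_set (\<lambda>i. \<Sum>l<r. V i l * W j l) {..<d} \<le> spec_norm d r V * L2_set (W j) {..<r}"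
      by (rule spec_mv)
    also have "\<dots> \<le> 1 * L2_set (W j) {..<r}" using V by (intro mult_right_mono) auto
    finally have "(L2_set (\<lambda>i. \<Sum>l<r. V i l * W j l) {..<d})\<^sup>2 \<le> (L2_set (W j) {..<r})\<^sup>2"
      by (intro power_mono) auto
    then show "(\<Sum>i<d. (\<Sum>l<r. V i l * W j l)\<^sup>2) \<le> (\<Sum>l<r. (W j l)\<^sup>2)"
      by (simp add: L2_set_def sum_nonneg)
  qed
  also have "\<dots> = (\<Sum>l<r. \<Sum>j<d. (W j l)\<^sup>2)" by (rule sum.swap)
  also have "\<dots> \<le> (\<Sum>l<r. 1)" by (intro sum_mono col_sq[OF W]) auto
  finally show ?thesis by simp
qed

lemma Avw_sq:
  assumes V: "spec_norm d r V \<le> 1" and W: "spec_norm d r W \<le> 1"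
  shows "(\<Sum>i<d. \<Sum>j<d. (Avw r V W i j)\<^sup>2) \<le> 4 * real r"
proof -
  have "(\<Sum>i<d. \<Sum>j<d. (Avw r V W i j)\<^sup>2) \<le> (\<Sum>i<d. \<Sum>j<d. 2 * (\<Sum>l<r. V i l * W j l)\<^sup>2 + 2 * (\<Sum>l<r. W i l * V j l)\<^sup>2)"
    unfolding Avw_def by (intro sum_mono sq_sum_le)
  also have "\<dots> = 2 * (\<Sum>i<d. \<Sum>j<d. (\<Sum>l<r. V i l * W j l)\<^sup>2) + 2 * (\<Sum>i<d. \<Sum>j<d. (\<Sum>l<r. W i l * V j l)\<^sup>2)"
    by (simp add: sum.distrib sum_distrib_left)
  also have "\<dots> \<le> 2 * real r + 2 * real r"
    using prod_sq_bound[OF V W] prod_sq_bound[OF W V] by linarith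
  finally show ?thesis by simp
qed

lemma Buv_sq:
  assumes U1: "spec_norm d 1 U1 \<le> 1" and U2: "spec_norm d 1 U2 \<le> 1"
  shows "(\<Sum>i<d. \<Sum>j<d. (Buv U1 U2 i j)\<^sup>2) \<le> 1"
proof -
  have a: "(\<Sum>i<d. (U1 i 0)\<^sup>2) \<le> 1" by (rule col_sq[OF U1]) simp
  have b: "(\<Sum>j<d. (U2 j 0)\<^sup>2) \<le> 1" by (rule col_sq[OF U2]) simp
  have "(\<Sum>i<d. \<Sum>j<d. (Buv U1 U2 i j)\<^sup>2) = (\<Sum>i<d. (U1 i 0)\<^sup>2 * (\<Sum>j<d. (U2 j 0)\<^sup>2))"
    by (simp add: Buv_def power_mult_distrib sum_distrib_left)
  also have "\<dots> = (\<Sum>i<d. (U1 i 0)\<^sup>2) * (\<Sum>j<d. (U2 j 0)\<^sup>2)"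
    by (simp add: sum_distrib_right)
  also have "\<dots> \<le> 1 * 1" using a b by (intro mult_mono) (auto intro: sum_nonneg)
  finally show ?thesis by simp
qed

lemma tau2_Cpm_bound:
  assumes V: "spec_norm d r V \<le> 1" and W: "spec_norm d r W \<le> 1"
    and U1: "spec_norm d 1 U1 \<le> 1" and U2: "spec_norm d 1 U2 \<le> 1"
    and r: "r \<ge> 1" and s: "s = sqrt (2 * sqrt (real r))" and c: "c = s \<or> c = - s"
  shows "tau2 d (\<lambda>i j. (1/s) * Avw r V W i j + c * Buv U1 U2 i j) \<le> 8 * sqrt (real r)"
proof -
  have sr: "sqrt (real r) > 0" using r by simp
  have s2: "s\<^sup>2 = 2 * sqrt (real r)" using s sr by simp
  have spos: "s > 0" using s sr by simp
  have c2: "c\<^sup>2 = s\<^sup>2" using c by auto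
  have tA: "tau2 d (Avw r V W) \<le> 4 * real r"
    using tau2_le_frob[of d "Avw r V W"] Avw_sq[OF V W] by linarith
  have tB: "tau2 d (Buv U1 U2) \<le> 1"
    using tau2_le_frob[of d "Buv U1 U2"] Buv_sq[OF U1 U2] by linarith
  have "tau2 d (\<lambda>i j. (1/s) * Avw r V W i j + c * Buv U1 U2 i j) \<le> 2 * tau2 d (Avw r V W) / s\<^sup>2 + 2 * c\<^sup>2 * tau2 d (Buv U1 U2)"
    by (rule tau2_pm_le[OF spos])
  also have "\<dots> \<le> 2 * (4 * real r) / s\<^sup>2 + 2 * c\<^sup>2 * 1"
    using tA tB spos by (intro add_mono divide_right_mono mult_left_mono) auto
  also have "\<dots> = 8 * sqrt (real r)"
  proof -
    have "real r = sqrt (real r) * sqrt (real r)" by simp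
    then have "2 * (4 * real r) / s\<^sup>2 = 4 * sqrt (real r)" using sr unfolding s2 by (simp add: field_simps)
    then show ?thesis unfolding c2 s2 by simp
  qed
  finally show ?thesis .
qed


lemma numeric:
  fixes x cv cu :: real
  assumes x: "1 \<le> x" and cv: "0 \<le> cv" "cv \<le> 17 powr x" and cu: "0 \<le> cu" "cu \<le> 17 powr x"
  shows "cv * cv * cu * cu * 2 * (2 * exp (- 100 * x)) \<le> 2 * exp (- x)"
proof -
  have l17: "ln (17::real) \<le> 16" using ln_le_minus_one[of 17] by simp
  have p: "17 powr x = exp (x * ln 17)" by (simp add: powr_def)
  have "cv * cv * cu * cu \<le> 17 powr x * 17 powr x * 17 powr x * 17 powr x"
    using cv cu by (intro mult_mono) auto
  also have "\<dots> = exp (4 * x * ln 17)" unfolding p by (simp add: mult_exp_exp algebra_simps)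
  also have "\<dots> \<le> exp (64 * x)" using l17 x by simp
  finally have c: "cv * cv * cu * cu \<le> exp (64 * x)" .
  have "cv * cv * cu * cu * 2 * (2 * exp (- 100 * x)) \<le> exp (64 * x) * 4 * exp (- 100 * x)"
    using c by (simp add: mult.assoc mult_right_mono)
  also have "\<dots> = 4 * exp (- 36 * x)" by (simp add: mult_exp_exp algebra_simps)
  also have "\<dots> \<le> 2 * exp (- x)"
  proof -
    have "1 + 35 * x \<le> exp (35 * x)" by (rule exp_ge_add_one_self)
    then have "2 \<le> exp (35 * x)" using x by linarith
    then have "2 * exp (- 36 * x) \<le> exp (35 * x) * exp (- 36 * x)" by (intro mult_right_mono) auto
    also have "\<dots> = exp (- x)" by (simp add: mult_exp_exp)
    finally show ?thesis by simp
  qed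
  finally show ?thesis .
qed

lemma main:
  fixes d r n :: nat
  assumes d: "d \<ge> 1" and r: "r \<ge> 1" and nbig: "real n \<ge> 1600 * real d * (real r)\<^sup>2"
  shows "\<exists>E \<in> sets (goe_sample_space n d).
         E \<subseteq> {\<omega> \<in> space (goe_sample_space n d).
                 \<forall>V. spec_norm d r V \<le> 1 \<longrightarrow>
                   spec_norm d d (XsX_minus_I n d (goe_mat \<omega>) (outer_VVt r V))
                     \<le> 160 * real r * sqrt (real d) / sqrt (real n)} \<and>
         measure (goe_sample_space n d) E
           \<ge> 1 - 2 * exp (- 1 * real d * real r) - 2 * exp (- 1 * real n)"
proof -
  have dr1: "1 \<le> real d * real r"
  proof -
    have "1 \<le> real d" "1 \<le> real r" using d r by auto
    then show ?thesis using mult_mono[of 1 "real d" 1 "real r"] by simp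
  qed
  have r2: "real r \<le> (real r)\<^sup>2" using r by (simp add: power2_eq_square)
  have ndr: "1600 * (real d * real r) \<le> real n"
  proof -
    have "1600 * (real d * real r) \<le> 1600 * real d * (real r)\<^sup>2"
      using r2 by (simp add: mult_left_mono)
    then show ?thesis using nbig by linarith
  qed
  have n1: "n \<ge> 1" using ndr dr1 by linarith
  have npos: "real n > 0" using n1 by simp
  interpret P: prob_space "goe_sample_space n d" by (rule goe_prob)
  define t where "t = 40 * sqrt (real d * real r / real n)"
  have t0: "0 \<le> t" by (simp add: t_def)
  have t2: "t\<^sup>2 = 1600 * (real d * real r) / real n"
    unfolding t_def using npos by (simp add: power_mult_distrib)
  have t1: "t \<le> 1"
  proof -
    have "t\<^sup>2 \<le> 1" unfolding t2 using ndr npos by (simp add: divide_le_eq)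
    then show ?thesis using t0 by (simp add: power_le_one_iff abs_le_iff power2_le_iff_abs_le)
  qed
  have nt: "real n * t\<^sup>2 / 16 = 100 * (real d * real r)"
    unfolding t2 using npos by simp
  define s where "s = sqrt (2 * sqrt (real r))"
  have s0: "s \<noteq> 0" using r by (simp add: s_def)
  define Q where "Q = 8 * sqrt (real r)"
  obtain NV where NV: "finite NV" "\<forall>W\<in>NV. spec_norm d r W \<le> 1" "real (card NV) \<le> (1 + 2/(1/8)) ^ (d * r)"
      "\<forall>V. spec_norm d r V \<le> 1 \<longrightarrow> (\<exists>W\<in>NV. spec_norm d r (\<lambda>i j. V i j - W i j) \<le> 1/8)"
    using spec_net[of "1/8" d r] by auto
  obtain NU where NU: "finite NU" "\<forall>W\<in>NU. spec_norm d 1 W \<le> 1" "real (card NU) \<le> (1 + 2/(1/8)) ^ (d * 1)"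
      "\<forall>V. spec_norm d 1 V \<le> 1 \<longrightarrow> (\<exists>W\<in>NU. spec_norm d 1 (\<lambda>i j. V i j - W i j) \<le> 1/8)"
    using spec_net[of "1/8" d 1] by auto
  define Cf where "Cf q c = (\<lambda>i j. (1/s) * Avw r (fst q) (fst (snd q)) i j + c * Buv (fst (snd (snd q))) (snd (snd (snd q))) i j)"
    for q :: "(nat \<Rightarrow> nat \<Rightarrow> real) \<times> (nat \<Rightarrow> nat \<Rightarrow> real) \<times> (nat \<Rightarrow> nat \<Rightarrow> real) \<times> (nat \<Rightarrow> nat \<Rightarrow> real)" and c :: real
  define Dev where "Dev \<omega> C = (\<Sum>k<n. (Gk d \<omega> k C)\<^sup>2) / real n - tau2 d C" for \<omega> C
  define IDX where "IDX = (NV \<times> NV \<times> NU \<times> NU) \<times> {s, - s}"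
  define Bad where "Bad x = {\<omega> \<in> space (goe_sample_space n d). t * Q < \<bar>Dev \<omega> (Cf (fst x) (snd x))\<bar>}" for x
  define E where "E = space (goe_sample_space n d) - (\<Union>x\<in>IDX. Bad x)"
  have finIDX: "finite IDX" using NV(1) NU(1) by (simp add: IDX_def)
  have Bad_sets: "Bad x \<in> P.events" for x
    unfolding Bad_def Dev_def by (rule dev_sets[OF n1 d])
  have Esets: "E \<in> P.events"
    unfolding E_def using finIDX Bad_sets by (intro sets.compl_sets sets.finite_UN) auto
  have tauQ: "tau2 d (Cf q c) \<le> Q" if "q \<in> NV \<times> NV \<times> NU \<times> NU" "c \<in> {s, - s}" for q c
  proof -
    obtain V0 W0 Y1 Y2 where q: "q = (V0, W0, Y1, Y2)" by (cases q) auto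
    show ?thesis
      unfolding Cf_def q Q_def using that NV(2) NU(2) r
      by (intro tau2_Cpm_bound[where s=s]) (auto simp: q s_def)
  qed
  have bad_prob: "P.prob (Bad x) \<le> 2 * exp (- real n * t\<^sup>2 / 16)" if "x \<in> IDX" for x
    unfolding Bad_def Dev_def
    by (rule dev_tail[OF n1 d t0 t1]) (use that tauQ in \<open>auto simp: IDX_def\<close>)
  have sub: "E \<subseteq> {\<omega> \<in> space (goe_sample_space n d).
                 \<forall>V. spec_norm d r V \<le> 1 \<longrightarrow>
                   spec_norm d d (XsX_minus_I n d (goe_mat \<omega>) (outer_VVt r V))
                     \<le> 160 * real r * sqrt (real d) / sqrt (real n)}"
  proof (intro subsetI CollectI conjI allI impI)
    fix \<omega> assume wE: "\<omega> \<in> E"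
    then show "\<omega> \<in> space (goe_sample_space n d)" by (simp add: E_def)
    fix V :: "nat \<Rightarrow> nat \<Rightarrow> real" assume V: "spec_norm d r V \<le> 1"
    have good: "\<bar>Dev \<omega> (Cf x c)\<bar> \<le> t * Q" if "x \<in> NV \<times> NV \<times> NU \<times> NU" "c \<in> {s, - s}" for x c
      using wE that by (auto simp: E_def Bad_def IDX_def not_less)
    have netb: "\<forall>V0\<in>NV. \<forall>W0\<in>NV. \<forall>U0\<in>NU. \<forall>U0'\<in>NU. \<bar>Psi n d r (goe_mat \<omega>) V0 W0 U0 U0'\<bar> \<le> t * Q / 2"
    proof (intro ballI)
      fix V0 W0 U0 U0' assume h: "V0 \<in> NV" "W0 \<in> NV" "U0 \<in> NU" "U0' \<in> NU"
      have eq: "Psi n d r (goe_mat \<omega>) V0 W0 U0 U0' = (Dev \<omega> (Cf (V0, W0, U0, U0') s) - Dev \<omega> (Cf (V0, W0, U0, U0') (- s))) / 4"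
        unfolding Psi_polar[OF s0] Dev_def Cf_def by simp
      have a1: "\<bar>Dev \<omega> (Cf (V0, W0, U0, U0') s)\<bar> \<le> t * Q" using h by (intro good) auto
      have a2: "\<bar>Dev \<omega> (Cf (V0, W0, U0, U0') (- s))\<bar> \<le> t * Q" using h by (intro good) auto
      have "\<bar>Dev \<omega> (Cf (V0, W0, U0, U0') s) - Dev \<omega> (Cf (V0, W0, U0, U0') (- s))\<bar> \<le> t * Q + t * Q"
        using a1 a2 abs_triangle_ineq4[of "Dev \<omega> (Cf (V0, W0, U0, U0') s)" "Dev \<omega> (Cf (V0, W0, U0, U0') (- s))"]
        by linarith
      then show "\<bar>Psi n d r (goe_mat \<omega>) V0 W0 U0 U0'\<bar> \<le> t * Q / 2"
        unfolding eq by (simp add: mult.commute mult.left_commute)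
    qed
    have "spec_norm d d (XsX_minus_I n d (goe_mat \<omega>) (outer_VVt r V)) \<le> t * Q / 2"
    proof (rule spec_from_Psi)
      fix U1 U2 assume "spec_norm d 1 U1 \<le> 1" "spec_norm d 1 U2 \<le> 1"
      then show "\<bar>Psi n d r (goe_mat \<omega>) V V U1 U2\<bar> \<le> 2 * (t * Q / 2)"
        by (intro bootstrap[OF NV(2) NU(2) NV(4) NU(4) netb V V])
    qed
    also have "t * Q / 2 = 160 * real r * sqrt (real d) / sqrt (real n)"
    proof -
      have "sqrt (real d * real r / real n) * sqrt (real r) = sqrt (real d) * real r / sqrt (real n)"
        by (simp add: real_sqrt_mult real_sqrt_divide)
      then show ?thesis unfolding t_def Q_def by (simp add: field_simps)
    qed
    finally show "spec_norm d d (XsX_minus_I n d (goe_mat \<omega>) (outer_VVt r V)) \<le> 160 * real r * sqrt (real d) / sqrt (real n)" .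
  qed
  have "P.prob E = 1 - P.prob (\<Union>x\<in>IDX. Bad x)"
    unfolding E_def using finIDX Bad_sets by (intro P.prob_compl sets.finite_UN) auto
  moreover have "P.prob (\<Union>x\<in>IDX. Bad x) \<le> (\<Sum>x\<in>IDX. P.prob (Bad x))"
    using finIDX Bad_sets by (intro P.finite_measure_subadditive_finite) auto
  moreover have "(\<Sum>x\<in>IDX. P.prob (Bad x)) \<le> real (card IDX) * (2 * exp (- real n * t\<^sup>2 / 16))"
    using bad_prob by (intro sum_bounded_above) auto
  moreover have "real (card IDX) * (2 * exp (- real n * t\<^sup>2 / 16)) \<le> 2 * exp (- real d * real r)"
  proof -
    have cI: "card IDX \<le> card NV * card NV * card NU * card NU * 2"
    proof -
      have "card {s, - s} \<le> 2" by (rule order.trans[OF card_insert_le_m1]) auto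
      then show ?thesis unfolding IDX_def using NV(1) NU(1)
        by (simp add: card_cartesian_product mult.assoc mult_le_mono)
    qed
    have e17: "(1 + 2 / (1/8::real)) = 17" by simp
    have pw: "(17::real) ^ (d * r) = 17 powr (real d * real r)"
      by (simp add: powr_realpow[symmetric])
    have cv: "real (card NV) \<le> 17 powr (real d * real r)" using NV(3) unfolding e17 pw .
    have cu: "real (card NU) \<le> 17 powr (real d * real r)"
    proof -
      have "(17::real) ^ (d * 1) \<le> 17 ^ (d * r)" using r by (intro power_increasing) auto
      then show ?thesis using NU(3) unfolding e17 pw by linarith
    qed
    have cIr: "real (card IDX) \<le> real (card NV * card NV * card NU * card NU * 2)"
      using cI by (simp only: of_nat_le_iff)
    have ee: "exp (- real n * t\<^sup>2 / 16) = exp (- 100 * (real d * real r))" using nt by simp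
    have "real (card IDX) * (2 * exp (- real n * t\<^sup>2 / 16)) \<le> real (card NV * card NV * card NU * card NU * 2) * (2 * exp (- 100 * (real d * real r)))"
      unfolding ee using cIr by (intro mult_right_mono) auto
    also have "real (card NV * card NV * card NU * card NU * 2) * (2 * exp (- 100 * (real d * real r)))
        \<le> 2 * exp (- (real d * real r))"
      using numeric[OF dr1 _ cv _ cu] by simp
    finally show ?thesis by simp
  qed
  ultimately have A: "P.prob E \<ge> 1 - 2 * exp (- real d * real r)" by linarith
  have B: "exp (- 1 * real d * real r) = exp (- real d * real r)" by simp
  have C: "0 \<le> exp (- 1 * real n)" by simp
  have "P.prob E \<ge> 1 - 2 * exp (- 1 * real d * real r) - 2 * exp (- 1 * real n)"
    unfolding B using A C by linarith
  then show ?thesis using Esets sub by blast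
qed


theorem lemma10:
  shows "\<exists>C C\<^sub>1 C\<^sub>2 C\<^sub>3 :: real. C > 0 \<and> C\<^sub>1 > 0 \<and> C\<^sub>2 > 0 \<and> C\<^sub>3 > 0 \<and>
    (\<forall>d r n :: nat. d \<ge> 1 \<longrightarrow> r \<ge> 1 \<longrightarrow> real n \<ge> C\<^sub>3 * real d * (real r)\<^sup>2 \<longrightarrow>
      (\<exists>E \<in> sets (goe_sample_space n d).
         E \<subseteq> {\<omega> \<in> space (goe_sample_space n d).
                 \<forall>V. spec_norm d r V \<le> 1 \<longrightarrow>
                   spec_norm d d (XsX_minus_I n d (goe_mat \<omega>) (outer_VVt r V))
                     \<le> C * real r * sqrt (real d) / sqrt (real n)} \<and>
         measure (goe_sample_space n d) E
           \<ge> 1 - 2 * exp (- C\<^sub>1 * real d * real r) - 2 * exp (- C\<^sub>2 * real n)))"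
proof (rule exI[of _ 160], rule exI[of _ 1], rule exI[of _ 1], rule exI[of _ 1600], intro conjI allI impI)
  fix d r n :: nat
  assume "d \<ge> 1" "r \<ge> 1" "real n \<ge> 1600 * real d * (real r)\<^sup>2"
  then show "\<exists>E \<in> sets (goe_sample_space n d).
         E \<subseteq> {\<omega> \<in> space (goe_sample_space n d).
                 \<forall>V. spec_norm d r V \<le> 1 \<longrightarrow>
                   spec_norm d d (XsX_minus_I n d (goe_mat \<omega>) (outer_VVt r V))
                     \<le> 160 * real r * sqrt (real d) / sqrt (real n)} \<and>
         measure (goe_sample_space n d) E
           \<ge> 1 - 2 * exp (- 1 * real d * real r) - 2 * exp (- 1 * real n)"
    by (rule main)
qed simp_all

end
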